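(* Let $R$ be a schematic semi-graded ring and $J$ a compatible semi-graded ideal of $R$. If $E$ is an LSG $R$-module that is $T$-closed in $\mathsf{LSG}\text{-}R$, then $f^!(E)$ (the largest SG $R$-submodule of $E$ annihilated by $J$, viewed as an $R/J$-module) is an LSG $R/J$-module that is $T$-closed in $\mathsf{LSG}\text{-}R/J$.
   Context: Rings are associative with $1$; modules are left modules. A ring $R$ is semi-graded (SG) if there are additive subgroups $R_n$ ($n\in\mathbb{Z}$) with $R=\bigoplus_n R_n$, $R_mR_n\subseteq\bigoplus_{k\le m+n}R_k$, and $1\in R_0$; positively SG if $R_n=0$ for $n<0$. An $R$-module $M$ is SG if $M=\bigoplus_nM_n$ with $R_mM_n\subseteq\bigoplus_{k\le m+n}M_k$ for $m\ge0$; homomorphisms are homogeneous if they preserve degrees; SG submodules are submodules $N$ with $N=\bigoplus(N\cap M_n)$. An SG ideal $J$ is a two-sided ideal that is an SG submodule of $R$; $R/J$ is SG with $(R/J)_n=(R_n+J)/J$. $f^!(E)$ is an SG $R/J$-module via $\overline r m=rm$, with $f^!(E)_n=f^!(E)\cap E_n$. Let $R'_n=\{r\in R_n: rh\in R_{n+m}\ \forall m,\forall h\in R_m\}$, $R''_n=\{r\in R'_n: hr\in R_{n+m}\ \forall m,\forall h\in R_m\}$, $R'=\bigcup R'_n$, $R''=\bigcup R''_n$, similarly for $R/J$. $M$ is LSG if $R'_nM_m\subseteq M_{n+m}$; $\mathsf{LSG}\text{-}R$ is the category of LSG modules with homogeneous homomorphisms. $J$ is compatible if the image of $R'$ in $R/J$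 is $(R/J)'$. A left Ore set $S$ is good if $S\subseteq R''$ and for $s\in S,r\in R'$ there are $u\in R'$, $v\in S$ with $us=vr$. $R_{\ge t}$ is the intersection of all SG ideals containing $\bigoplus_{k\ge t}R_k$ (likewise $(R/J)_{\ge t}$). $m\in M$ is torsion if $(R_{\ge t})^nm=0$ for some $n,t\ge0$; $M$ is torsion if all its elements are. $R$ is schematic if it is positively SG, left Noetherian, and there is a finite set $I$ of good left Ore sets $S$ with $S\cap\bigoplus_{k\ge1}R_k\ne\emptyset$ such that for each $(x_S)\in\prod_{S\in I}S$ there are $t,m$ with $(R_{\ge t})^m\subseteq\sum_SRx_S$. An object $E$ of $\mathsf{LSG}\text{-}R$ is $T$-closed if for every object $M$, every SG submodule $N$ with $M/N$ torsion, every morphism $N\to E$ extends uniquely to a morphism $M\to E$ (equivalently $E$ is torsion-free and has the extension property); the same definition applies over $R/J$ with $(R/J)_{\ge t}$. *)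

theory Defs
  imports "HOL-Algebra.Module" "HOL-Algebra.QuotRing" "HOL-Algebra.Ideal_Product"
begin

definition gsub :: "('a, 'b) ring_scheme \<Rightarrow> (int \<Rightarrow> 'a set) \<Rightarrow> int set \<Rightarrow> 'a set" where
  "gsub G g A = {finsum G c S | c S. finite S \<and> S \<subseteq> A \<and> (\<forall>k\<in>S. c k \<in> g k)}"

definition graded_sum :: "('a, 'b) ring_scheme \<Rightarrow> (int \<Rightarrow> 'a set) \<Rightarrow> bool" where
  "graded_sum G g \<longleftrightarrow>
     (\<forall>n. additive_subgroup (g n) G) \<and>
     (\<forall>x\<in>carrier G. \<exists>!c. (\<forall>n. c n \<in> g n) \<and> finite {n. c n \<noteq> \<zero>\<^bsub>G\<^esub>} \<and>
                          x = finsum G c {n. c n \<noteq> \<zero>\<^bsub>G\<^esub>})"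

definition SG_ring :: "('a, 'b) ring_scheme \<Rightarrow> (int \<Rightarrow> 'a set) \<Rightarrow> bool" where
  "SG_ring R g \<longleftrightarrow> ring R \<and> graded_sum R g \<and>
     (\<forall>m n. \<forall>x\<in>g m. \<forall>y\<in>g n. x \<otimes>\<^bsub>R\<^esub> y \<in> gsub R g {..m+n}) \<and> \<one>\<^bsub>R\<^esub> \<in> g 0"

definition pos_SG_ring :: "('a, 'b) ring_scheme \<Rightarrow> (int \<Rightarrow> 'a set) \<Rightarrow> bool" where
  "pos_SG_ring R g \<longleftrightarrow> SG_ring R g \<and> (\<forall>n<0. g n = {\<zero>\<^bsub>R\<^esub>})"

definition Rp_n :: "('a, 'b) ring_scheme \<Rightarrow> (int \<Rightarrow> 'a set) \<Rightarrow> int \<Rightarrow> 'a set" where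
  "Rp_n R g n = {r \<in> g n. \<forall>m. \<forall>h\<in>g m. r \<otimes>\<^bsub>R\<^esub> h \<in> g (n + m)}"

definition Rpp_n :: "('a, 'b) ring_scheme \<Rightarrow> (int \<Rightarrow> 'a set) \<Rightarrow> int \<Rightarrow> 'a set" where
  "Rpp_n R g n = {r \<in> Rp_n R g n. \<forall>m. \<forall>h\<in>g m. h \<otimes>\<^bsub>R\<^esub> r \<in> g (n + m)}"

definition Rp :: "('a, 'b) ring_scheme \<Rightarrow> (int \<Rightarrow> 'a set) \<Rightarrow> 'a set" where
  "Rp R g = (\<Union>n. Rp_n R g n)"

definition Rpp :: "('a, 'b) ring_scheme \<Rightarrow> (int \<Rightarrow> 'a set) \<Rightarrow> 'a set" where
  "Rpp R g = (\<Union>n. Rpp_n R g n)"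

definition SG_ideal :: "('a, 'b) ring_scheme \<Rightarrow> (int \<Rightarrow> 'a set) \<Rightarrow> 'a set \<Rightarrow> bool" where
  "SG_ideal R g J \<longleftrightarrow> ideal J R \<and> J = gsub R (\<lambda>n. J \<inter> g n) UNIV"

definition R_ge :: "('a, 'b) ring_scheme \<Rightarrow> (int \<Rightarrow> 'a set) \<Rightarrow> int \<Rightarrow> 'a set" where
  "R_ge R g t = \<Inter>{J. SG_ideal R g J \<and> gsub R g {t..} \<subseteq> J}"

primrec ideal_pow :: "('a, 'b) ring_scheme \<Rightarrow> 'a set \<Rightarrow> nat \<Rightarrow> 'a set" where
  "ideal_pow R I 0 = carrier R"
| "ideal_pow R I (Suc n) = ideal_prod R I (ideal_pow R I n)"

definition quot_grading :: "('a, 'b) ring_scheme \<Rightarrow> (int \<Rightarrow> 'a set) \<Rightarrow> 'a set \<Rightarrow> int \<Rightarrow> 'a set set" where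
  "quot_grading R g J n = {J +>\<^bsub>R\<^esub> r | r. r \<in> g n}"

definition compatible_ideal :: "('a, 'b) ring_scheme \<Rightarrow> (int \<Rightarrow> 'a set) \<Rightarrow> 'a set \<Rightarrow> bool" where
  "compatible_ideal R g J \<longleftrightarrow>
     {J +>\<^bsub>R\<^esub> r | r. r \<in> Rp R g} = Rp (R Quot J) (quot_grading R g J)"

definition left_ideal :: "('a, 'b) ring_scheme \<Rightarrow> 'a set \<Rightarrow> bool" where
  "left_ideal R L \<longleftrightarrow> additive_subgroup L R \<and>
     (\<forall>r\<in>carrier R. \<forall>x\<in>L. r \<otimes>\<^bsub>R\<^esub> x \<in> L)"

definition left_noetherian :: "('a, 'b) ring_scheme \<Rightarrow> bool" where
  "left_noetherian R \<longleftrightarrow>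
     (\<forall>L :: nat \<Rightarrow> 'a set. (\<forall>n. left_ideal R (L n)) \<and> mono L \<longrightarrow>
        (\<exists>n. \<forall>m\<ge>n. L m = L n))"

definition left_ore_set :: "('a, 'b) ring_scheme \<Rightarrow> 'a set \<Rightarrow> bool" where
  "left_ore_set R S \<longleftrightarrow> S \<subseteq> carrier R \<and> \<one>\<^bsub>R\<^esub> \<in> S \<and>
     (\<forall>s\<in>S. \<forall>s'\<in>S. s \<otimes>\<^bsub>R\<^esub> s' \<in> S) \<and>
     (\<forall>s\<in>S. \<forall>r\<in>carrier R. \<exists>s'\<in>S. \<exists>r'\<in>carrier R. s' \<otimes>\<^bsub>R\<^esub> r = r' \<otimes>\<^bsub>R\<^esub> s)"

definition good_ore_set :: "('a, 'b) ring_scheme \<Rightarrow> (int \<Rightarrow> 'a set) \<Rightarrow> 'a set \<Rightarrow> bool" where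
  "good_ore_set R g S \<longleftrightarrow> left_ore_set R S \<and> S \<subseteq> Rpp R g \<and>
     (\<forall>s\<in>S. \<forall>r\<in>Rp R g. \<exists>u\<in>Rp R g. \<exists>v\<in>S. u \<otimes>\<^bsub>R\<^esub> s = v \<otimes>\<^bsub>R\<^esub> r)"

definition left_span :: "('a, 'b) ring_scheme \<Rightarrow> 'c set \<Rightarrow> ('c \<Rightarrow> 'a) \<Rightarrow> 'a set" where
  "left_span R I x = {finsum R (\<lambda>S. r S \<otimes>\<^bsub>R\<^esub> x S) I | r. r \<in> I \<rightarrow> carrier R}"

definition schematic :: "('a, 'b) ring_scheme \<Rightarrow> (int \<Rightarrow> 'a set) \<Rightarrow> bool" where
  "schematic R g \<longleftrightarrow> pos_SG_ring R g \<and> left_noetherian R \<and>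
     (\<exists>I :: 'a set set. finite I \<and> (\<forall>S\<in>I. good_ore_set R g S) \<and>
        (\<forall>S\<in>I. S \<inter> gsub R g {1..} \<noteq> {}) \<and>
        (\<forall>x. (\<forall>S\<in>I. x S \<in> S) \<longrightarrow>
           (\<exists>t m. ideal_pow R (R_ge R g t) m \<subseteq> left_span R I x)))"

definition lmodule :: "('a, 'b) ring_scheme \<Rightarrow> ('a, 'm) module \<Rightarrow> bool" where
  "lmodule R M \<longleftrightarrow> ring R \<and> abelian_group M \<and>
     (\<forall>a\<in>carrier R. \<forall>x\<in>carrier M. a \<odot>\<^bsub>M\<^esub> x \<in> carrier M) \<and>
     (\<forall>a\<in>carrier R. \<forall>b\<in>carrier R. \<forall>x\<in>carrier M.
        (a \<oplus>\<^bsub>R\<^esub> b) \<odot>\<^bsub>M\<^esub> x = a \<odot>\<^bsub>M\<^esub> x \<oplus>\<^bsub>M\<^esub> b \<odot>\<^bsub>M\<^esub> x) \<and>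
     (\<forall>a\<in>carrier R. \<forall>x\<in>carrier M. \<forall>y\<in>carrier M.
        a \<odot>\<^bsub>M\<^esub> (x \<oplus>\<^bsub>M\<^esub> y) = a \<odot>\<^bsub>M\<^esub> x \<oplus>\<^bsub>M\<^esub> a \<odot>\<^bsub>M\<^esub> y) \<and>
     (\<forall>a\<in>carrier R. \<forall>b\<in>carrier R. \<forall>x\<in>carrier M.
        (a \<otimes>\<^bsub>R\<^esub> b) \<odot>\<^bsub>M\<^esub> x = a \<odot>\<^bsub>M\<^esub> (b \<odot>\<^bsub>M\<^esub> x)) \<and>
     (\<forall>x\<in>carrier M. \<one>\<^bsub>R\<^esub> \<odot>\<^bsub>M\<^esub> x = x)"

definition SG_module :: "('a, 'b) ring_scheme \<Rightarrow> (int \<Rightarrow> 'a set) \<Rightarrow>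
    ('a, 'm) module \<Rightarrow> (int \<Rightarrow> 'm set) \<Rightarrow> bool" where
  "SG_module R g M gM \<longleftrightarrow> SG_ring R g \<and> lmodule R M \<and> graded_sum M gM \<and>
     (\<forall>m n. m \<ge> 0 \<longrightarrow> (\<forall>r\<in>g m. \<forall>x\<in>gM n. r \<odot>\<^bsub>M\<^esub> x \<in> gsub M gM {..m+n}))"

definition LSG_module :: "('a, 'b) ring_scheme \<Rightarrow> (int \<Rightarrow> 'a set) \<Rightarrow>
    ('a, 'm) module \<Rightarrow> (int \<Rightarrow> 'm set) \<Rightarrow> bool" where
  "LSG_module R g M gM \<longleftrightarrow> SG_module R g M gM \<and>
     (\<forall>n m. \<forall>r\<in>Rp_n R g n. \<forall>x\<in>gM m. r \<odot>\<^bsub>M\<^esub> x \<in> gM (n + m))"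

definition submodule_set :: "('a, 'b) ring_scheme \<Rightarrow> ('a, 'm) module \<Rightarrow> 'm set \<Rightarrow> bool" where
  "submodule_set R M N \<longleftrightarrow> N \<subseteq> carrier M \<and> \<zero>\<^bsub>M\<^esub> \<in> N \<and>
     (\<forall>x\<in>N. \<forall>y\<in>N. x \<oplus>\<^bsub>M\<^esub> y \<in> N) \<and>
     (\<forall>a\<in>carrier R. \<forall>x\<in>N. a \<odot>\<^bsub>M\<^esub> x \<in> N)"

definition SG_submodule :: "('a, 'b) ring_scheme \<Rightarrow> ('a, 'm) module \<Rightarrow> (int \<Rightarrow> 'm set) \<Rightarrow> 'm set \<Rightarrow> bool" where
  "SG_submodule R M gM N \<longleftrightarrow> submodule_set R M N \<and> N = gsub M (\<lambda>n. N \<inter> gM n) UNIV"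

definition quotient_torsion :: "('a, 'b) ring_scheme \<Rightarrow> (int \<Rightarrow> 'a set) \<Rightarrow>
    ('a, 'm) module \<Rightarrow> 'm set \<Rightarrow> bool" where
  "quotient_torsion R g M N \<longleftrightarrow>
     (\<forall>x\<in>carrier M. \<exists>n::nat. \<exists>t::int. t \<ge> 0 \<and>
        (\<forall>a\<in>ideal_pow R (R_ge R g t) n. a \<odot>\<^bsub>M\<^esub> x \<in> N))"

definition gr_hom :: "('a, 'b) ring_scheme \<Rightarrow> ('a, 'm) module \<Rightarrow> (int \<Rightarrow> 'm set) \<Rightarrow>
    ('a, 'e) module \<Rightarrow> (int \<Rightarrow> 'e set) \<Rightarrow> ('m \<Rightarrow> 'e) \<Rightarrow> bool" where
  "gr_hom R M gM E gE f \<longleftrightarrow> f ` carrier M \<subseteq> carrier E \<and>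
     (\<forall>x\<in>carrier M. \<forall>y\<in>carrier M. f (x \<oplus>\<^bsub>M\<^esub> y) = f x \<oplus>\<^bsub>E\<^esub> f y) \<and>
     (\<forall>a\<in>carrier R. \<forall>x\<in>carrier M. f (a \<odot>\<^bsub>M\<^esub> x) = a \<odot>\<^bsub>E\<^esub> f x) \<and>
     (\<forall>n. f ` gM n \<subseteq> gE n)"

text \<open>E is T-closed in LSG-R.  Objects M range over LSG modules whose elements
  live in the type 'm (HOL cannot quantify over all types inside a formula).\<close>
definition T_closed :: "'m itself \<Rightarrow> ('a, 'b) ring_scheme \<Rightarrow> (int \<Rightarrow> 'a set) \<Rightarrow>
    ('a, 'e) module \<Rightarrow> (int \<Rightarrow> 'e set) \<Rightarrow> bool" where
  "T_closed _ R g E gE \<longleftrightarrow> LSG_module R g E gE \<and>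
     (\<forall>(M :: ('a, 'm) module) gM N \<phi>.
        LSG_module R g M gM \<and> SG_submodule R M gM N \<and> quotient_torsion R g M N \<and>
        gr_hom R (M\<lparr>carrier := N\<rparr>) (\<lambda>n. N \<inter> gM n) E gE \<phi> \<longrightarrow>
        (\<exists>\<psi>. gr_hom R M gM E gE \<psi> \<and> (\<forall>x\<in>N. \<psi> x = \<phi> x)) \<and>
        (\<forall>\<psi>1 \<psi>2. gr_hom R M gM E gE \<psi>1 \<and> (\<forall>x\<in>N. \<psi>1 x = \<phi> x) \<and>
                  gr_hom R M gM E gE \<psi>2 \<and> (\<forall>x\<in>N. \<psi>2 x = \<phi> x) \<longrightarrow>
                  (\<forall>x\<in>carrier M. \<psi>1 x = \<psi>2 x)))"

definition annihilated_by :: "('a, 'm) module \<Rightarrow> 'a set \<Rightarrow> 'm set \<Rightarrow> bool" where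
  "annihilated_by E J N \<longleftrightarrow> (\<forall>j\<in>J. \<forall>x\<in>N. j \<odot>\<^bsub>E\<^esub> x = \<zero>\<^bsub>E\<^esub>)"

text \<open>Largest SG R-submodule of E annihilated by J (union of all such; this family
  is closed under sums, so the union is the largest one).\<close>
definition fshriek_set :: "('a, 'b) ring_scheme \<Rightarrow> ('a, 'm) module \<Rightarrow> (int \<Rightarrow> 'm set) \<Rightarrow> 'a set \<Rightarrow> 'm set" where
  "fshriek_set R E gE J = \<Union>{N. SG_submodule R E gE N \<and> annihilated_by E J N}"

text \<open>f^!(E) as an R/J-module: (r + J) m = r m.\<close>
definition fshriek :: "('a, 'b) ring_scheme \<Rightarrow> ('a, 'm) module \<Rightarrow> (int \<Rightarrow> 'm set) \<Rightarrow> 'a set \<Rightarrow> ('a set, 'm) module" where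
  "fshriek R E gE J =
     \<lparr> carrier = fshriek_set R E gE J, monoid.mult = monoid.mult E, one = one E,
       zero = zero E, add = add E, smult = (\<lambda>C x. (SOME r. r \<in> C) \<odot>\<^bsub>E\<^esub> x) \<rparr>"

definition fshriek_grading :: "('a, 'b) ring_scheme \<Rightarrow> ('a, 'm) module \<Rightarrow> (int \<Rightarrow> 'm set) \<Rightarrow> 'a set \<Rightarrow> int \<Rightarrow> 'm set" where
  "fshriek_grading R E gE J n = fshriek_set R E gE J \<inter> gE n"

end

theory Submission
  imports Defs
begin
definition supp :: "('a, 'b) ring_scheme \<Rightarrow> (int \<Rightarrow> 'a) \<Rightarrow> int set" where
  "supp G c = {n. c n \<noteq> \<zero>\<^bsub>G\<^esub>}"

definition decomp :: "('a, 'b) ring_scheme \<Rightarrow> (int \<Rightarrow> 'a set) \<Rightarrow> 'a \<Rightarrow> (int \<Rightarrow> 'a) \<Rightarrow> bool" where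
  "decomp G g x c \<longleftrightarrow> (\<forall>n. c n \<in> g n) \<and> finite (supp G c) \<and> x = finsum G c (supp G c)"

definition cmp :: "('a, 'b) ring_scheme \<Rightarrow> (int \<Rightarrow> 'a set) \<Rightarrow> 'a \<Rightarrow> int \<Rightarrow> 'a" where
  "cmp G g x = (THE c. decomp G g x c)"

definition ext :: "('a, 'b) ring_scheme \<Rightarrow> (int \<Rightarrow> 'a) \<Rightarrow> int set \<Rightarrow> int \<Rightarrow> 'a" where
  "ext G c S = (\<lambda>k. if k \<in> S then c k else \<zero>\<^bsub>G\<^esub>)"

lemma graded_sum_alt:
  "graded_sum G g \<longleftrightarrow> (\<forall>n. additive_subgroup (g n) G) \<and> (\<forall>x\<in>carrier G. \<exists>!c. decomp G g x c)"
  unfolding graded_sum_def decomp_def supp_def by blast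

context abelian_group
begin

lemma finsum_supp:
  assumes "finite S" "supp G c \<subseteq> S" "c \<in> S \<rightarrow> carrier G"
  shows "finsum G c S = finsum G c (supp G c)" "finite (supp G c)"
proof -
  show "finite (supp G c)" using assms finite_subset by blast
  show "finsum G c S = finsum G c (supp G c)"
    by (rule add.finprod_mono_neutral_cong_right) (use assms in \<open>auto simp: supp_def\<close>)
qed

lemma supp_ext: "supp G (ext G c S) \<subseteq> S"
  by (auto simp: supp_def ext_def)

lemma finsum_ext:
  assumes "finite S" "c \<in> S \<rightarrow> carrier G"
  shows "finsum G c S = finsum G (ext G c S) (supp G (ext G c S))"
proof -
  have "finsum G c S = finsum G (ext G c S) S"
    by (rule finsum_cong') (use assms in \<open>auto simp: ext_def\<close>)
  also have "\<dots> = finsum G (ext G c S) (supp G (ext G c S))"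
    by (rule finsum_supp(1)) (use assms supp_ext in \<open>auto simp: ext_def\<close>)
  finally show ?thesis .
qed

lemma minus_zero_iff:
  assumes "x \<in> carrier G" "y \<in> carrier G"
  shows "x \<ominus> y = \<zero> \<longleftrightarrow> x = y"
proof
  assume "x \<ominus> y = \<zero>"
  then have "x \<oplus> \<ominus> y = \<zero>" by (simp add: minus_eq)
  then have "\<ominus> (\<ominus> y) = x" using assms by (intro minus_equality) (auto simp: add.m_comm)
  then show "x = y" using assms by simp
next
  assume "x = y" then show "x \<ominus> y = \<zero>" using assms by (simp add: minus_eq r_neg)
qed

lemma finsum_closed_sub:
  assumes "N \<subseteq> carrier G" "\<zero> \<in> N" "\<And>x y. x \<in> N \<Longrightarrow> y \<in> N \<Longrightarrow> x \<oplus> y \<in> N"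
    and "\<forall>k\<in>S. c k \<in> N"
  shows "finsum G c S \<in> N"
  using assms(4)
proof (induct S rule: infinite_finite_induct)
  case (infinite A) then show ?case using assms by (simp add: finsum_def finprod_def)
next
  case empty then show ?case using assms by simp
next
  case (insert x F)
  have "c \<in> F \<rightarrow> carrier G" using insert assms by auto
  moreover have "c x \<in> carrier G" using insert assms by auto
  ultimately have "finsum G c (insert x F) = c x \<oplus> finsum G c F" using insert by simp
  then show ?case using insert assms by auto
qed

end

locale gsum = abelian_group G for G (structure) +
  fixes g
  assumes gs: "graded_sum G g"
begin

lemma sub: "additive_subgroup (g n) G"
  using gs by (simp add: graded_sum_def)

lemma g_carr: "x \<in> g n \<Longrightarrow> x \<in> carrier G"
  using additive_subgroup.a_subset[OF sub] by blast

lemma g_zero: "\<zero> \<in> g n"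
  using additive_subgroup.zero_closed[OF sub] .

lemma g_add: "x \<in> g n \<Longrightarrow> y \<in> g n \<Longrightarrow> x \<oplus> y \<in> g n"
  using additive_subgroup.a_closed[OF sub] by blast

lemma g_neg: "x \<in> g n \<Longrightarrow> \<ominus> x \<in> g n"
  using additive_subgroup.a_inv_closed[OF sub] by blast

lemma ex1: "x \<in> carrier G \<Longrightarrow> \<exists>!c. decomp G g x c"
  using gs by (simp add: graded_sum_alt)

lemma decomp_carr: "decomp G g x c \<Longrightarrow> x \<in> carrier G"
  unfolding decomp_def using g_carr by (auto intro!: finsum_closed)

lemma decomp_unique: "decomp G g x c \<Longrightarrow> decomp G g x d \<Longrightarrow> c = d"
  using ex1 decomp_carr by blast

lemma cmp_decomp: "x \<in> carrier G \<Longrightarrow> decomp G g x (cmp G g x)"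
  unfolding cmp_def using ex1 by (rule theI')

lemma cmp_eq: "decomp G g x c \<Longrightarrow> cmp G g x = c"
  using cmp_decomp decomp_carr decomp_unique by blast

lemma cmp_in: "x \<in> carrier G \<Longrightarrow> cmp G g x n \<in> g n"
  using cmp_decomp unfolding decomp_def by blast

lemma cmp_carr: "x \<in> carrier G \<Longrightarrow> cmp G g x n \<in> carrier G"
  using cmp_in g_carr by blast

lemma homog_decomp:
  assumes "finite S" "\<forall>k\<in>S. c k \<in> g k"
  shows "decomp G g (finsum G c S) (ext G c S)"
  unfolding decomp_def
proof (intro conjI allI)
  fix n show "ext G c S n \<in> g n" using assms g_zero by (auto simp: ext_def)
next
  show "finite (supp G (ext G c S))" using supp_ext assms finite_subset by blast
next
  show "finsum G c S = finsum G (ext G c S) (supp G (ext G c S))"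
    by (rule finsum_ext) (use assms g_carr in auto)
qed

lemma cmp_finsum:
  assumes "finite S" "\<forall>k\<in>S. c k \<in> g k"
  shows "cmp G g (finsum G c S) = ext G c S"
  using homog_decomp[OF assms] cmp_eq by blast

lemma cmp_zero: "cmp G g \<zero> = (\<lambda>_. \<zero>)"
  using cmp_finsum[of "{}" undefined] by (simp add: ext_def)

lemma cmp_sum_repr:
  assumes "x \<in> carrier G" "finite U" "supp G (cmp G g x) \<subseteq> U"
  shows "x = finsum G (cmp G g x) U"
proof -
  have "x = finsum G (cmp G g x) (supp G (cmp G g x))"
    using cmp_decomp[OF assms(1)] by (simp add: decomp_def)
  also have "\<dots> = finsum G (cmp G g x) U"
    by (rule finsum_supp(1)[symmetric]) (use assms cmp_carr in auto)
  finally show ?thesis .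
qed

lemma cmp_add:
  assumes x: "x \<in> carrier G" and y: "y \<in> carrier G"
  shows "cmp G g (x \<oplus> y) = (\<lambda>n. cmp G g x n \<oplus> cmp G g y n)"
proof -
  let ?U = "supp G (cmp G g x) \<union> supp G (cmp G g y)"
  have fU: "finite ?U" using cmp_decomp[OF x] cmp_decomp[OF y] by (simp add: decomp_def)
  have "x \<oplus> y = finsum G (cmp G g x) ?U \<oplus> finsum G (cmp G g y) ?U"
    using cmp_sum_repr[OF x fU] cmp_sum_repr[OF y fU] by auto
  also have "\<dots> = finsum G (\<lambda>n. cmp G g x n \<oplus> cmp G g y n) ?U"
    by (rule finsum_addf[symmetric]) (use x y cmp_carr in auto)
  finally have "cmp G g (x \<oplus> y) = ext G (\<lambda>n. cmp G g x n \<oplus> cmp G g y n) ?U"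
    using cmp_finsum[OF fU] cmp_in x y g_add by auto
  also have "\<dots> = (\<lambda>n. cmp G g x n \<oplus> cmp G g y n)"
    by (auto simp: ext_def supp_def fun_eq_iff)
  finally show ?thesis .
qed

lemma cmp_neg:
  assumes x: "x \<in> carrier G"
  shows "cmp G g (\<ominus> x) n = \<ominus> cmp G g x n"
proof -
  have "cmp G g (\<ominus> x \<oplus> x) n = cmp G g (\<ominus> x) n \<oplus> cmp G g x n"
    using cmp_add[of "\<ominus> x" x] x by simp
  then have "\<zero> = cmp G g (\<ominus> x) n \<oplus> cmp G g x n"
    using x cmp_zero by (simp add: l_neg)
  then show ?thesis
    using x cmp_carr minus_equality[of "cmp G g (\<ominus> x) n" "cmp G g x n"]
    by (metis add.inv_closed minus_minus)
qed

lemma cmp_minus: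
  assumes "x \<in> carrier G" "y \<in> carrier G"
  shows "cmp G g (x \<ominus> y) n = cmp G g x n \<ominus> cmp G g y n"
  using assms cmp_add cmp_neg by (simp add: a_minus_def)

lemma homog_comp:
  assumes "x \<in> g n"
  shows "cmp G g x = ext G (\<lambda>_. x) {n}"
proof -
  have "cmp G g (finsum G (\<lambda>_. x) {n}) = ext G (\<lambda>_. x) {n}"
    using cmp_finsum[of "{n}" "\<lambda>_. x"] assms by auto
  then show ?thesis using assms g_carr by simp
qed

lemma homog_disjoint:
  assumes "x \<in> g n" "x \<in> g k" "n \<noteq> k"
  shows "x = \<zero>"
  using homog_comp[OF assms(1)] homog_comp[OF assms(2)] assms(3)
  by (metis ext_def insertI1 singletonD)

lemma gsub_iff:
  "x \<in> gsub G g A \<longleftrightarrow> x \<in> carrier G \<and> (\<forall>n. n \<notin> A \<longrightarrow> cmp G g x n = \<zero>)"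
proof
  assume "x \<in> gsub G g A"
  then obtain c S where x: "x = finsum G c S" "finite S" "S \<subseteq> A" "\<forall>k\<in>S. c k \<in> g k"
    by (auto simp: gsub_def)
  then show "x \<in> carrier G \<and> (\<forall>n. n \<notin> A \<longrightarrow> cmp G g x n = \<zero>)"
    using cmp_finsum[of S c] decomp_carr[OF homog_decomp[of S c]] by (auto simp: ext_def)
next
  assume a: "x \<in> carrier G \<and> (\<forall>n. n \<notin> A \<longrightarrow> cmp G g x n = \<zero>)"
  have "x = finsum G (cmp G g x) (supp G (cmp G g x))" "finite (supp G (cmp G g x))"
    using cmp_decomp a by (auto simp: decomp_def)
  moreover have "supp G (cmp G g x) \<subseteq> A" using a by (auto simp: supp_def)
  ultimately show "x \<in> gsub G g A"
    unfolding gsub_def using cmp_in a by blast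
qed

lemma SG_iff:
  assumes "N \<subseteq> carrier G" "\<zero> \<in> N" "\<And>x y. x \<in> N \<Longrightarrow> y \<in> N \<Longrightarrow> x \<oplus> y \<in> N"
  shows "N = gsub G (\<lambda>n. N \<inter> g n) UNIV \<longleftrightarrow> (\<forall>x\<in>N. \<forall>n. cmp G g x n \<in> N)"
proof
  assume eq: "N = gsub G (\<lambda>n. N \<inter> g n) UNIV"
  show "\<forall>x\<in>N. \<forall>n. cmp G g x n \<in> N"
  proof (intro ballI allI)
    fix x n assume "x \<in> N"
    then have "x \<in> gsub G (\<lambda>n. N \<inter> g n) UNIV" using eq by simp
    then obtain c S where x: "x = finsum G c S" "finite S" "\<forall>k\<in>S. c k \<in> N \<inter> g k"
      unfolding gsub_def by blast
    then have "cmp G g x = ext G c S" using cmp_finsum[of S c] by auto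
    then show "cmp G g x n \<in> N" using x assms by (auto simp: ext_def)
  qed
next
  assume h: "\<forall>x\<in>N. \<forall>n. cmp G g x n \<in> N"
  show "N = gsub G (\<lambda>n. N \<inter> g n) UNIV"
  proof
    show "N \<subseteq> gsub G (\<lambda>n. N \<inter> g n) UNIV"
    proof
      fix x assume xN: "x \<in> N"
      then have xc: "x \<in> carrier G" using assms by auto
      have "x = finsum G (cmp G g x) (supp G (cmp G g x))" "finite (supp G (cmp G g x))"
        using cmp_decomp[OF xc] by (auto simp: decomp_def)
      then show "x \<in> gsub G (\<lambda>n. N \<inter> g n) UNIV"
        unfolding gsub_def using cmp_in[OF xc] h xN by blast
    qed
  next
    show "gsub G (\<lambda>n. N \<inter> g n) UNIV \<subseteq> N"
      unfolding gsub_def by (auto intro!: finsum_closed_sub[OF assms])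
  qed
qed

end

locale sgq = R?: ring R for R (structure) +
  fixes g J
  assumes SG: "SG_ring R g" and SGI: "SG_ideal R g J"
begin

sublocale gR: gsum R g
  using SG by (unfold_locales) (simp add: SG_ring_def)

lemma idl: "ideal J R" using SGI by (simp add: SG_ideal_def)

lemma Qring: "ring (R Quot J)" using idl ideal.quotient_is_ring by blast

sublocale pi: ring_hom_ring R "R Quot J" "(+>) J"
  using idl ideal.rcos_ring_hom_ring by blast

lemma Jsub: "J \<subseteq> carrier R" using additive_subgroup.a_subset[OF ideal.axioms(1)[OF idl]] .

lemma carrier_Q: "carrier (R Quot J) = (+>) J ` carrier R"
  unfolding FactRing_def A_RCOSETS_def'[of R J] by auto

lemma zero_Q: "\<zero>\<^bsub>R Quot J\<^esub> = J" unfolding FactRing_def by simp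

lemma absub: "abelian_subgroup J R"
  using idl ideal.axioms(1) abelian_subgroupI3 is_abelian_group by blast

lemma pi_zero_iff: "r \<in> carrier R \<Longrightarrow> J +> r = J \<longleftrightarrow> r \<in> J"
proof
  assume "r \<in> carrier R" "J +> r = J"
  then show "r \<in> J" using abelian_subgroup.a_rcos_self[OF absub] by metis
next
  assume "r \<in> J" then show "J +> r = J" using abelian_subgroup.a_rcos_const[OF absub] by blast
qed

lemma Qag: "abelian_group (R Quot J)" using Qring ring.is_abelian_group by blast

lemma Qam: "abelian_monoid (R Quot J)" using Qag abelian_group.axioms(1) by blast

lemma pi_minus: "a \<in> carrier R \<Longrightarrow> b \<in> carrier R \<Longrightarrow> J +> (a \<ominus> b) = (J +> a) \<ominus>\<^bsub>R Quot J\<^esub> (J +> b)"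
  by (simp add: a_minus_def)

lemma pi_eq_iff: "a \<in> carrier R \<Longrightarrow> b \<in> carrier R \<Longrightarrow> J +> a = J +> b \<longleftrightarrow> a \<ominus> b \<in> J"
  using pi_minus[of a b] abelian_group.minus_zero_iff[OF Qag, of "J +> a" "J +> b"]
    pi_zero_iff[of "a \<ominus> b"] zero_Q by simp

lemma qg_eq: "quot_grading R g J n = (+>) J ` g n"
  unfolding quot_grading_def by auto

lemma pi_finsum: "f \<in> A \<rightarrow> carrier R \<Longrightarrow> J +> finsum R f A = finsum (R Quot J) (\<lambda>i. J +> f i) A"
proof (induct A rule: infinite_finite_induct)
  case (infinite A) then show ?case by (simp add: finsum_def finprod_def)
next
  case empty then show ?case by simp
next
  case (insert x F)
  then show ?case
    using abelian_monoid.finsum_insert[OF Qam] by (auto simp: Pi_def)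
qed

lemma J_SG: "\<forall>x\<in>J. \<forall>n. cmp R g x n \<in> J"
proof -
  have eq: "J = gsub R (\<lambda>n. J \<inter> g n) UNIV" using SGI by (simp add: SG_ideal_def)
  have h: "J = gsub R (\<lambda>n. J \<inter> g n) UNIV \<longleftrightarrow> (\<forall>x\<in>J. \<forall>n. cmp R g x n \<in> J)"
    by (rule gR.SG_iff) (use Jsub additive_subgroup.zero_closed[OF ideal.axioms(1)[OF idl]]
      additive_subgroup.a_closed[OF ideal.axioms(1)[OF idl]] in auto)
  from h eq show ?thesis by (rule iffD1)
qed

lemma J_comp: "r \<in> J \<Longrightarrow> cmp R g r n \<in> J"
  using J_SG by blast

lemma qg_sub: "additive_subgroup (quot_grading R g J n) (R Quot J)"
  unfolding qg_eq
  by (rule additive_subgroupI, rule pi.img_is_add_subgroup) (use gR.sub additive_subgroup.a_subgroup in blast)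

lemma pi_decomp:
  assumes r: "r \<in> carrier R"
  shows "decomp (R Quot J) (quot_grading R g J) (J +> r) (\<lambda>n. J +> cmp R g r n)"
proof -
  let ?S = "supp R (cmp R g r)"
  have fS: "finite ?S" using gR.cmp_decomp[OF r] by (simp add: decomp_def)
  have "J +> r = J +> finsum R (cmp R g r) ?S"
    using gR.cmp_decomp[OF r] by (simp add: decomp_def)
  also have "\<dots> = finsum (R Quot J) (\<lambda>n. J +> cmp R g r n) ?S"
    by (rule pi_finsum) (use gR.cmp_carr r in auto)
  also have "\<dots> = finsum (R Quot J) (\<lambda>n. J +> cmp R g r n) (supp (R Quot J) (\<lambda>n. J +> cmp R g r n))"
    by (rule abelian_group.finsum_supp(1)[OF Qag fS]) (use gR.cmp_carr r in \<open>auto simp: supp_def\<close>)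
  moreover have "supp (R Quot J) (\<lambda>n. J +> cmp R g r n) \<subseteq> ?S"
    by (auto simp: supp_def)
  ultimately show ?thesis
    unfolding decomp_def qg_eq
    using abelian_group.finsum_supp(2)[OF Qag fS, of "\<lambda>n. J +> cmp R g r n"] gR.cmp_in[OF r] gR.cmp_carr[OF r]
    by auto
qed

lemma pi_decomp_unique:
  assumes r: "r \<in> carrier R" and d: "decomp (R Quot J) (quot_grading R g J) (J +> r) d"
  shows "d = (\<lambda>n. J +> cmp R g r n)"
proof -
  let ?T = "supp (R Quot J) d"
  have fT: "finite ?T" and dT: "J +> r = finsum (R Quot J) d ?T" and dg: "\<And>n. d n \<in> (+>) J ` g n"
    using d by (auto simp: decomp_def qg_eq)
  define s where "s n = (SOME s. s \<in> g n \<and> J +> s = d n)" for n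
  have s: "s n \<in> g n \<and> J +> s n = d n" for n
    unfolding s_def using dg[of n] by (rule imageE) (rule someI, blast)
  have sc: "s n \<in> carrier R" for n using s gR.g_carr by blast
  have "J +> r = finsum (R Quot J) (\<lambda>n. J +> s n) ?T" using dT s by simp
  also have "\<dots> = J +> finsum R s ?T" by (rule pi_finsum[symmetric]) (use sc in auto)
  finally have "finsum R s ?T \<ominus> r \<in> J" using pi_eq_iff[of "finsum R s ?T" r] r sc by auto
  then have cJ: "cmp R g (finsum R s ?T \<ominus> r) n \<in> J" for n using J_comp by blast
  have "cmp R g (finsum R s ?T \<ominus> r) n = ext R s ?T n \<ominus> cmp R g r n" for n
    using gR.cmp_minus[of "finsum R s ?T" r] gR.cmp_finsum[OF fT, of s] s r sc by auto
  then have eq: "J +> ext R s ?T n = J +> cmp R g r n" for n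
    using cJ pi_eq_iff gR.cmp_carr[OF r] sc by (simp add: ext_def)
  show ?thesis
  proof
    fix n show "d n = J +> cmp R g r n"
    proof (cases "n \<in> ?T")
      case True then show ?thesis using eq[of n] s[of n] by (simp add: ext_def)
    next
      case False
      then have "d n = J" using zero_Q by (simp add: supp_def)
      then show ?thesis using eq[of n] zero_Q False by (simp add: ext_def)
    qed
  qed
qed

lemma gsQ: "graded_sum (R Quot J) (quot_grading R g J)"
  unfolding graded_sum_alt
proof (intro conjI allI ballI)
  fix n show "additive_subgroup (quot_grading R g J n) (R Quot J)" by (rule qg_sub)
next
  fix X assume "X \<in> carrier (R Quot J)"
  then obtain r where r: "r \<in> carrier R" "X = J +> r" using carrier_Q by auto
  show "\<exists>!c. decomp (R Quot J) (quot_grading R g J) X c"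
    using pi_decomp[OF r(1)] pi_decomp_unique[OF r(1)] r(2) by blast
qed

sublocale gQ: gsum "R Quot J" "quot_grading R g J"
  by (rule gsum.intro[OF Qag]) (unfold_locales, rule gsQ)

lemma compQ: "r \<in> carrier R \<Longrightarrow> cmp (R Quot J) (quot_grading R g J) (J +> r) = (\<lambda>n. J +> cmp R g r n)"
  using gQ.cmp_eq pi_decomp by blast

end

context gsum begin

lemma sub_SG_comp:
  assumes "additive_subgroup N G" "N = gsub G (\<lambda>n. N \<inter> g n) UNIV" "x \<in> N"
  shows "cmp G g x n \<in> N"
proof -
  have h: "N = gsub G (\<lambda>n. N \<inter> g n) UNIV \<longleftrightarrow> (\<forall>x\<in>N. \<forall>n. cmp G g x n \<in> N)"
    by (rule SG_iff) (use additive_subgroup.a_subset[OF assms(1)] additive_subgroup.zero_closed[OF assms(1)]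
      additive_subgroup.a_closed[OF assms(1)] in auto)
  from h assms(2) have "\<forall>x\<in>N. \<forall>n. cmp G g x n \<in> N" by (rule iffD1)
  then show ?thesis using assms(3) by blast
qed

lemma sub_SG_intro:
  assumes "additive_subgroup N G" "\<And>x n. x \<in> N \<Longrightarrow> cmp G g x n \<in> N"
  shows "N = gsub G (\<lambda>n. N \<inter> g n) UNIV"
proof -
  have h: "N = gsub G (\<lambda>n. N \<inter> g n) UNIV \<longleftrightarrow> (\<forall>x\<in>N. \<forall>n. cmp G g x n \<in> N)"
    by (rule SG_iff) (use additive_subgroup.a_subset[OF assms(1)] additive_subgroup.zero_closed[OF assms(1)]
      additive_subgroup.a_closed[OF assms(1)] in auto)
  from h show ?thesis using assms(2) by blast
qed

end

context sgq begin

lemma pi_gsub: "a \<in> gsub R g A \<Longrightarrow> J +> a \<in> gsub (R Quot J) (quot_grading R g J) A"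
  using gR.gsub_iff[of a A] gQ.gsub_iff[of "J +> a" A] compQ[of a] by simp

lemma SG_Q: "SG_ring (R Quot J) (quot_grading R g J)"
  unfolding SG_ring_def
proof (intro conjI allI ballI)
  show "ring (R Quot J)" by (rule Qring)
  show "graded_sum (R Quot J) (quot_grading R g J)" by (rule gsQ)
  show "\<one>\<^bsub>R Quot J\<^esub> \<in> quot_grading R g J 0"
  proof -
    have "\<one>\<^bsub>R Quot J\<^esub> = J +> \<one>" by simp
    moreover have "\<one> \<in> g 0" using SG by (simp add: SG_ring_def)
    ultimately show ?thesis unfolding qg_eq by (rule image_eqI)
  qed
next
  fix m n x y assume x: "x \<in> quot_grading R g J m" and y: "y \<in> quot_grading R g J n"
  then obtain a b where ab: "a \<in> g m" "b \<in> g n" "x = J +> a" "y = J +> b" by (auto simp: qg_eq)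
  then have "a \<otimes> b \<in> gsub R g {..m+n}" using SG by (simp add: SG_ring_def)
  then show "x \<otimes>\<^bsub>R Quot J\<^esub> y \<in> gsub (R Quot J) (quot_grading R g J) {..m + n}"
  proof -
    have "J +> (a \<otimes> b) = x \<otimes>\<^bsub>R Quot J\<^esub> y" using ab gR.g_carr pi.hom_mult by metis
    then show ?thesis using pi_gsub[OF \<open>a \<otimes> b \<in> gsub R g {..m+n}\<close>] by simp
  qed
qed

lemma vimage_SG:
  assumes K: "SG_ideal (R Quot J) (quot_grading R g J) K"
  shows "SG_ideal R g {r \<in> carrier R. J +> r \<in> K}"
proof -
  have iK: "ideal K (R Quot J)" using K by (simp add: SG_ideal_def)
  have iP: "ideal {r \<in> carrier R. J +> r \<in> K} R" by (rule pi.ideal_vimage[OF iK])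
  have "{r \<in> carrier R. J +> r \<in> K} = gsub R (\<lambda>n. {r \<in> carrier R. J +> r \<in> K} \<inter> g n) UNIV"
  proof (rule gR.sub_SG_intro)
    show "additive_subgroup {r \<in> carrier R. J +> r \<in> K} R" using iP ideal.axioms(1) by blast
  next
    fix x n assume x: "x \<in> {r \<in> carrier R. J +> r \<in> K}"
    have "cmp (R Quot J) (quot_grading R g J) (J +> x) n \<in> K"
      by (rule gQ.sub_SG_comp) (use iK ideal.axioms(1) K x in \<open>auto simp: SG_ideal_def\<close>)
    then show "cmp R g x n \<in> {r \<in> carrier R. J +> r \<in> K}"
      using compQ x gR.cmp_carr by auto
  qed
  then show ?thesis using iP by (simp add: SG_ideal_def)
qed

lemma carrier_SG: "SG_ideal R g (carrier R)"
proof -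
  have "carrier R = gsub R (\<lambda>n. carrier R \<inter> g n) UNIV"
    by (rule gR.sub_SG_intro) (use ideal.axioms(1)[OF oneideal] gR.cmp_carr in auto)
  then show ?thesis using oneideal by (simp add: SG_ideal_def)
qed

lemma Rge_carr: "R_ge R g t \<subseteq> carrier R"
proof -
  have "gsub R g {t..} \<subseteq> carrier R" using gR.gsub_iff by blast
  then show ?thesis unfolding R_ge_def using carrier_SG by blast
qed

lemma Rge_map: "i \<in> R_ge R g t \<Longrightarrow> J +> i \<in> R_ge (R Quot J) (quot_grading R g J) t"
proof -
  assume i: "i \<in> R_ge R g t"
  show ?thesis unfolding R_ge_def
  proof (rule InterI)
    fix K assume "K \<in> {K. SG_ideal (R Quot J) (quot_grading R g J) K \<and> gsub (R Quot J) (quot_grading R g J) {t..} \<subseteq> K}"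
    then have K: "SG_ideal (R Quot J) (quot_grading R g J) K" "gsub (R Quot J) (quot_grading R g J) {t..} \<subseteq> K"
      by auto
    have "gsub R g {t..} \<subseteq> {r \<in> carrier R. J +> r \<in> K}"
      using pi_gsub K(2) gR.gsub_iff by blast
    then have "R_ge R g t \<subseteq> {r \<in> carrier R. J +> r \<in> K}"
      unfolding R_ge_def using vimage_SG[OF K(1)] by blast
    then show "J +> i \<in> K" using i by blast
  qed
qed

lemma pow_map:
  "a \<in> ideal_pow R (R_ge R g t) n \<Longrightarrow> a \<in> carrier R \<and> J +> a \<in> ideal_pow (R Quot J) (R_ge (R Quot J) (quot_grading R g J) t) n"
proof (induct n arbitrary: a)
  case 0 then show ?case by (simp add: carrier_Q)
next
  case (Suc n)
  have "a \<in> ideal_prod R (R_ge R g t) (ideal_pow R (R_ge R g t) n)" using Suc.prems by simp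
  then have "a \<in> carrier R \<and> J +> a \<in> ideal_prod (R Quot J) (R_ge (R Quot J) (quot_grading R g J) t)
                  (ideal_pow (R Quot J) (R_ge (R Quot J) (quot_grading R g J) t) n)"
  proof (induct rule: ideal_prod.induct)
    case (prod i j)
    then have "i \<in> carrier R" "j \<in> carrier R" using Rge_carr Suc.hyps by auto
    then show ?case using prod Rge_map Suc.hyps by (auto intro: ideal_prod.prod)
  next
    case (sum s1 s2)
    then show ?case by (auto intro: ideal_prod.sum)
  qed
  then show ?case by simp
qed

end

locale lmod =
  fixes R :: "('a, 'b) ring_scheme" and M :: "('a, 'm) module"
  assumes lm: "lmodule R M"
begin

lemma Rr: "ring R" using lm by (simp add: lmodule_def)
lemma Mag: "abelian_group M" using lm by (simp add: lmodule_def)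

sublocale Mg: abelian_group M by (rule Mag)
sublocale Rg: ring R by (rule Rr)

lemma sm_closed: "a \<in> carrier R \<Longrightarrow> x \<in> carrier M \<Longrightarrow> a \<odot>\<^bsub>M\<^esub> x \<in> carrier M"
  using lm by (simp add: lmodule_def)
lemma sm_ldistr: "a \<in> carrier R \<Longrightarrow> b \<in> carrier R \<Longrightarrow> x \<in> carrier M \<Longrightarrow>
  (a \<oplus>\<^bsub>R\<^esub> b) \<odot>\<^bsub>M\<^esub> x = a \<odot>\<^bsub>M\<^esub> x \<oplus>\<^bsub>M\<^esub> b \<odot>\<^bsub>M\<^esub> x"
  using lm by (simp add: lmodule_def)
lemma sm_rdistr: "a \<in> carrier R \<Longrightarrow> x \<in> carrier M \<Longrightarrow> y \<in> carrier M \<Longrightarrow>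
  a \<odot>\<^bsub>M\<^esub> (x \<oplus>\<^bsub>M\<^esub> y) = a \<odot>\<^bsub>M\<^esub> x \<oplus>\<^bsub>M\<^esub> a \<odot>\<^bsub>M\<^esub> y"
  using lm by (simp add: lmodule_def)
lemma sm_assoc: "a \<in> carrier R \<Longrightarrow> b \<in> carrier R \<Longrightarrow> x \<in> carrier M \<Longrightarrow>
  (a \<otimes>\<^bsub>R\<^esub> b) \<odot>\<^bsub>M\<^esub> x = a \<odot>\<^bsub>M\<^esub> (b \<odot>\<^bsub>M\<^esub> x)"
  using lm by (simp add: lmodule_def)
lemma sm_one: "x \<in> carrier M \<Longrightarrow> \<one>\<^bsub>R\<^esub> \<odot>\<^bsub>M\<^esub> x = x"
  using lm by (simp add: lmodule_def)

lemma sm_zero_l: assumes x: "x \<in> carrier M" shows "\<zero>\<^bsub>R\<^esub> \<odot>\<^bsub>M\<^esub> x = \<zero>\<^bsub>M\<^esub>"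
proof -
  have z: "\<zero>\<^bsub>R\<^esub> \<in> carrier R" using ring.ring_simprules(2)[OF Rr] .
  have "\<zero>\<^bsub>R\<^esub> \<odot>\<^bsub>M\<^esub> x \<oplus>\<^bsub>M\<^esub> \<zero>\<^bsub>R\<^esub> \<odot>\<^bsub>M\<^esub> x = \<zero>\<^bsub>R\<^esub> \<odot>\<^bsub>M\<^esub> x \<oplus>\<^bsub>M\<^esub> \<zero>\<^bsub>M\<^esub>"
    using sm_ldistr[OF z z x] Mg.r_zero sm_closed[OF z x]
      ring.ring_simprules(15)[OF Rr z] by simp
  then show ?thesis
    using Mg.add.l_cancel_one[of "\<zero>\<^bsub>R\<^esub> \<odot>\<^bsub>M\<^esub> x" "\<zero>\<^bsub>R\<^esub> \<odot>\<^bsub>M\<^esub> x"] sm_closed[OF z x] by simp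
qed

lemma sm_zero_r: assumes a: "a \<in> carrier R" shows "a \<odot>\<^bsub>M\<^esub> \<zero>\<^bsub>M\<^esub> = \<zero>\<^bsub>M\<^esub>"
proof -
  have z: "\<zero>\<^bsub>M\<^esub> \<in> carrier M" using Mg.zero_closed .
  have "a \<odot>\<^bsub>M\<^esub> \<zero>\<^bsub>M\<^esub> \<oplus>\<^bsub>M\<^esub> a \<odot>\<^bsub>M\<^esub> \<zero>\<^bsub>M\<^esub> = a \<odot>\<^bsub>M\<^esub> \<zero>\<^bsub>M\<^esub> \<oplus>\<^bsub>M\<^esub> \<zero>\<^bsub>M\<^esub>"
    using sm_rdistr[OF a z z] Mg.r_zero sm_closed[OF a z] z by simp
  then show ?thesis
    using Mg.add.l_cancel_one[of "a \<odot>\<^bsub>M\<^esub> \<zero>\<^bsub>M\<^esub>" "a \<odot>\<^bsub>M\<^esub> \<zero>\<^bsub>M\<^esub>"] sm_closed[OF a z] by simp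
qed

lemma sm_neg: assumes x: "x \<in> carrier M" shows "(\<ominus>\<^bsub>R\<^esub> \<one>\<^bsub>R\<^esub>) \<odot>\<^bsub>M\<^esub> x = \<ominus>\<^bsub>M\<^esub> x"
proof -
  have o: "\<one>\<^bsub>R\<^esub> \<in> carrier R" "\<ominus>\<^bsub>R\<^esub> \<one>\<^bsub>R\<^esub> \<in> carrier R"
    using ring.ring_simprules(6,3)[OF Rr] by auto
  have "(\<ominus>\<^bsub>R\<^esub> \<one>\<^bsub>R\<^esub>) \<odot>\<^bsub>M\<^esub> x \<oplus>\<^bsub>M\<^esub> x = (\<ominus>\<^bsub>R\<^esub> \<one>\<^bsub>R\<^esub> \<oplus>\<^bsub>R\<^esub> \<one>\<^bsub>R\<^esub>) \<odot>\<^bsub>M\<^esub> x"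
    using sm_ldistr[OF o(2) o(1) x] sm_one[OF x] by simp
  also have "\<dots> = \<zero>\<^bsub>M\<^esub>" using ring.ring_simprules(9)[OF Rr o(1)] sm_zero_l[OF x] by simp
  finally show ?thesis
    using Mg.minus_equality sm_closed[OF o(2) x] x
    by (metis Mg.minus_minus Mg.minus_equality)
qed

end

locale fsh =
  fixes R :: "('a, 'b) ring_scheme" and g and E :: "('a, 'e) module" and gE and J
  assumes LSG: "LSG_module R g E gE" and SGI: "SG_ideal R g J"
begin

lemma SGm: "SG_module R g E gE" using LSG by (simp add: LSG_module_def)
lemma SGR: "SG_ring R g" using SGm by (simp add: SG_module_def)
lemma lmE: "lmodule R E" using SGm by (simp add: SG_module_def)
lemma gsE: "graded_sum E gE" using SGm by (simp add: SG_module_def)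
lemma Rring: "ring R" using SGR by (simp add: SG_ring_def)

sublocale Q: sgq R g J
  by (rule sgq.intro[OF Rring]) (unfold_locales, rule SGR, rule SGI)

sublocale mE: lmod R E by (unfold_locales, rule lmE)

sublocale gEE: gsum E gE
  by (rule gsum.intro[OF mE.Mag]) (unfold_locales, rule gsE)

abbreviation "fs \<equiv> fshriek_set R E gE J"
abbreviation "F \<equiv> fshriek R E gE J"

lemma F_carrier [simp]: "carrier F = fs" by (simp add: fshriek_def)
lemma F_add [simp]: "add F = add E" by (simp add: fshriek_def)
lemma F_zero [simp]: "zero F = zero E" by (simp add: fshriek_def)
lemma F_sm: "smult F C x = (SOME r. r \<in> C) \<odot>\<^bsub>E\<^esub> x" by (simp add: fshriek_def)

lemma fsI: "SG_submodule R E gE N \<Longrightarrow> annihilated_by E J N \<Longrightarrow> x \<in> N \<Longrightarrow> x \<in> fs"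
  unfolding fshriek_set_def by blast

lemma fsE: "x \<in> fs \<Longrightarrow> \<exists>N. SG_submodule R E gE N \<and> annihilated_by E J N \<and> x \<in> N"
  unfolding fshriek_set_def by blast

lemma fs_carr: "x \<in> fs \<Longrightarrow> x \<in> carrier E"
  using fsE unfolding SG_submodule_def submodule_set_def by blast

lemma fs_ann: "x \<in> fs \<Longrightarrow> j \<in> J \<Longrightarrow> j \<odot>\<^bsub>E\<^esub> x = \<zero>\<^bsub>E\<^esub>"
  using fsE unfolding annihilated_by_def by blast

lemma SGsub_cmp:
  assumes "SG_submodule R E gE N" "x \<in> N"
  shows "cmp E gE x n \<in> N"
proof -
  have sm: "submodule_set R E N" and eq: "N = gsub E (\<lambda>n. N \<inter> gE n) UNIV"
    using assms by (auto simp: SG_submodule_def)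
  have h: "N = gsub E (\<lambda>n. N \<inter> gE n) UNIV \<longleftrightarrow> (\<forall>x\<in>N. \<forall>n. cmp E gE x n \<in> N)"
    by (rule gEE.SG_iff) (use sm in \<open>auto simp: submodule_set_def\<close>)
  from h eq have "\<forall>x\<in>N. \<forall>n. cmp E gE x n \<in> N" by (rule iffD1)
  then show ?thesis using assms by blast
qed

lemma SGsub_intro:
  assumes sm: "submodule_set R E N" and c: "\<And>x n. x \<in> N \<Longrightarrow> cmp E gE x n \<in> N"
  shows "SG_submodule R E gE N"
proof -
  have h: "N = gsub E (\<lambda>n. N \<inter> gE n) UNIV \<longleftrightarrow> (\<forall>x\<in>N. \<forall>n. cmp E gE x n \<in> N)"
    by (rule gEE.SG_iff) (use sm in \<open>auto simp: submodule_set_def\<close>)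
  then show ?thesis using sm c by (simp add: SG_submodule_def)
qed

lemma fs_cmp: "x \<in> fs \<Longrightarrow> cmp E gE x n \<in> fs"
  using fsE SGsub_cmp fsI by metis

lemma fs_zero: "\<zero>\<^bsub>E\<^esub> \<in> fs"
proof (rule fsI)
  show "SG_submodule R E gE {\<zero>\<^bsub>E\<^esub>}"
    by (rule SGsub_intro) (auto simp: submodule_set_def mE.sm_zero_r gEE.cmp_zero)
  show "annihilated_by E J {\<zero>\<^bsub>E\<^esub>}"
    using Q.Jsub by (auto simp: annihilated_by_def mE.sm_zero_r)
qed simp

lemma fs_smult: "a \<in> carrier R \<Longrightarrow> x \<in> fs \<Longrightarrow> a \<odot>\<^bsub>E\<^esub> x \<in> fs"
proof -
  assume a: "a \<in> carrier R" and x: "x \<in> fs"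
  obtain N where N: "SG_submodule R E gE N" "annihilated_by E J N" "x \<in> N" using fsE[OF x] by blast
  then have "a \<odot>\<^bsub>E\<^esub> x \<in> N" using a by (simp add: SG_submodule_def submodule_set_def)
  then show ?thesis using N fsI by blast
qed

lemma fs_neg: "x \<in> fs \<Longrightarrow> \<ominus>\<^bsub>E\<^esub> x \<in> fs"
proof -
  assume x: "x \<in> fs"
  have "(\<ominus>\<^bsub>R\<^esub> \<one>\<^bsub>R\<^esub>) \<odot>\<^bsub>E\<^esub> x \<in> fs" by (rule fs_smult) (use x in auto)
  then show ?thesis using mE.sm_neg[OF fs_carr[OF x]] by simp
qed

lemma fs_add:
  assumes x: "x \<in> fs" and y: "y \<in> fs"
  shows "x \<oplus>\<^bsub>E\<^esub> y \<in> fs"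
proof -
  obtain N1 where N1: "SG_submodule R E gE N1" "annihilated_by E J N1" "x \<in> N1" using fsE[OF x] by blast
  obtain N2 where N2: "SG_submodule R E gE N2" "annihilated_by E J N2" "y \<in> N2" using fsE[OF y] by blast
  have s1: "submodule_set R E N1" and s2: "submodule_set R E N2"
    using N1 N2 by (auto simp: SG_submodule_def)
  let ?N = "{a \<oplus>\<^bsub>E\<^esub> b | a b. a \<in> N1 \<and> b \<in> N2}"
  have c1: "N1 \<subseteq> carrier E" and c2: "N2 \<subseteq> carrier E" using s1 s2 by (auto simp: submodule_set_def)
  have sm: "submodule_set R E ?N"
    unfolding submodule_set_def
  proof (intro conjI ballI)
    show "?N \<subseteq> carrier E" using c1 c2 by auto
    show "\<zero>\<^bsub>E\<^esub> \<in> ?N"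
    proof -
      have "\<zero>\<^bsub>E\<^esub> = \<zero>\<^bsub>E\<^esub> \<oplus>\<^bsub>E\<^esub> \<zero>\<^bsub>E\<^esub>" by simp
      moreover have "\<zero>\<^bsub>E\<^esub> \<in> N1" "\<zero>\<^bsub>E\<^esub> \<in> N2" using s1 s2 by (auto simp: submodule_set_def)
      ultimately show ?thesis by blast
    qed
  next
    fix u v assume "u \<in> ?N" "v \<in> ?N"
    then obtain a b a' b' where u: "u = a \<oplus>\<^bsub>E\<^esub> b" "a \<in> N1" "b \<in> N2"
      and v: "v = a' \<oplus>\<^bsub>E\<^esub> b'" "a' \<in> N1" "b' \<in> N2" by blast
    have cc: "a \<in> carrier E" "b \<in> carrier E" "a' \<in> carrier E" "b' \<in> carrier E"
      using u v c1 c2 by auto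
    have "u \<oplus>\<^bsub>E\<^esub> v = (a \<oplus>\<^bsub>E\<^esub> a') \<oplus>\<^bsub>E\<^esub> (b \<oplus>\<^bsub>E\<^esub> b')"
      unfolding u(1) v(1) using cc by (simp add: mE.Mg.a_ac)
    moreover have "a \<oplus>\<^bsub>E\<^esub> a' \<in> N1" "b \<oplus>\<^bsub>E\<^esub> b' \<in> N2" using u v s1 s2 by (auto simp: submodule_set_def)
    ultimately show "u \<oplus>\<^bsub>E\<^esub> v \<in> ?N" by blast
  next
    fix r u assume r: "r \<in> carrier R" and "u \<in> ?N"
    then obtain a b where u: "u = a \<oplus>\<^bsub>E\<^esub> b" "a \<in> N1" "b \<in> N2" by blast
    have "r \<odot>\<^bsub>E\<^esub> u = r \<odot>\<^bsub>E\<^esub> a \<oplus>\<^bsub>E\<^esub> r \<odot>\<^bsub>E\<^esub> b" using mE.sm_rdistr[of r a b] r u c1 c2 by (simp add: subset_iff)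
    moreover have "r \<odot>\<^bsub>E\<^esub> a \<in> N1" "r \<odot>\<^bsub>E\<^esub> b \<in> N2" using u r s1 s2 by (auto simp: submodule_set_def)
    ultimately show "r \<odot>\<^bsub>E\<^esub> u \<in> ?N" by blast
  qed
  have "SG_submodule R E gE ?N"
  proof (rule SGsub_intro[OF sm])
    fix u n assume "u \<in> ?N"
    then obtain a b where u: "u = a \<oplus>\<^bsub>E\<^esub> b" "a \<in> N1" "b \<in> N2" by blast
    have "cmp E gE u n = cmp E gE a n \<oplus>\<^bsub>E\<^esub> cmp E gE b n" using gEE.cmp_add[of a b] u c1 c2 by (simp add: subset_iff)
    moreover have "cmp E gE a n \<in> N1" "cmp E gE b n \<in> N2" using SGsub_cmp N1 N2 u by auto
    ultimately show "cmp E gE u n \<in> ?N" by blast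
  qed
  moreover have "annihilated_by E J ?N"
    unfolding annihilated_by_def
  proof (intro ballI)
    fix j u assume j: "j \<in> J" and "u \<in> ?N"
    then obtain a b where u: "u = a \<oplus>\<^bsub>E\<^esub> b" "a \<in> N1" "b \<in> N2" by blast
    have "j \<odot>\<^bsub>E\<^esub> u = j \<odot>\<^bsub>E\<^esub> a \<oplus>\<^bsub>E\<^esub> j \<odot>\<^bsub>E\<^esub> b" using mE.sm_rdistr[of j a b] j Q.Jsub u c1 c2 by (simp add: subset_iff)
    then show "j \<odot>\<^bsub>E\<^esub> u = \<zero>\<^bsub>E\<^esub>" using N1 N2 u j by (simp add: annihilated_by_def)
  qed
  moreover have "x \<oplus>\<^bsub>E\<^esub> y \<in> ?N" using N1 N2 by blast
  ultimately show ?thesis by (rule fsI)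
qed

lemma F_smult:
  assumes r: "r \<in> carrier R" and x: "x \<in> fs"
  shows "smult F (J +>\<^bsub>R\<^esub> r) x = r \<odot>\<^bsub>E\<^esub> x"
proof -
  have "r \<in> J +>\<^bsub>R\<^esub> r" using abelian_subgroup.a_rcos_self[OF Q.absub r] .
  then have "(SOME r'. r' \<in> J +>\<^bsub>R\<^esub> r) \<in> J +>\<^bsub>R\<^esub> r" by (rule someI)
  then obtain j where j: "j \<in> J" "(SOME r'. r' \<in> J +>\<^bsub>R\<^esub> r) = j \<oplus>\<^bsub>R\<^esub> r"
    unfolding a_r_coset_def'[of R J r] by blast
  have "smult F (J +>\<^bsub>R\<^esub> r) x = (j \<oplus>\<^bsub>R\<^esub> r) \<odot>\<^bsub>E\<^esub> x" using j F_sm by simp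
  also have "\<dots> = j \<odot>\<^bsub>E\<^esub> x \<oplus>\<^bsub>E\<^esub> r \<odot>\<^bsub>E\<^esub> x" using mE.sm_ldistr j r x fs_carr Q.Jsub by auto
  also have "\<dots> = r \<odot>\<^bsub>E\<^esub> x" using fs_ann[OF x j(1)] mE.sm_closed r fs_carr x by simp
  finally show ?thesis .
qed

end

context fsh begin

abbreviation "gF \<equiv> fshriek_grading R E gE J"

lemma gF_eq: "gF n = fs \<inter> gE n" by (simp add: fshriek_grading_def)

lemma F_ag: "abelian_group F"
proof (rule abelian_groupI)
  fix x y assume "x \<in> carrier F" "y \<in> carrier F"
  then show "x \<oplus>\<^bsub>F\<^esub> y \<in> carrier F" using fs_add by simp
next
  show "\<zero>\<^bsub>F\<^esub> \<in> carrier F" using fs_zero by simp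
next
  fix x y z assume "x \<in> carrier F" "y \<in> carrier F" "z \<in> carrier F"
  then show "x \<oplus>\<^bsub>F\<^esub> y \<oplus>\<^bsub>F\<^esub> z = x \<oplus>\<^bsub>F\<^esub> (y \<oplus>\<^bsub>F\<^esub> z)"
    using fs_carr mE.Mg.a_assoc by simp
next
  fix x y assume "x \<in> carrier F" "y \<in> carrier F"
  then show "x \<oplus>\<^bsub>F\<^esub> y = y \<oplus>\<^bsub>F\<^esub> x" using fs_carr mE.Mg.a_comm by simp
next
  fix x assume "x \<in> carrier F"
  then show "\<zero>\<^bsub>F\<^esub> \<oplus>\<^bsub>F\<^esub> x = x" using fs_carr by simp
next
  fix x assume x: "x \<in> carrier F"
  then have "\<ominus>\<^bsub>E\<^esub> x \<in> carrier F" "\<ominus>\<^bsub>E\<^esub> x \<oplus>\<^bsub>F\<^esub> x = \<zero>\<^bsub>F\<^esub>"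
    using fs_neg fs_carr mE.Mg.l_neg by auto
  then show "\<exists>y\<in>carrier F. y \<oplus>\<^bsub>F\<^esub> x = \<zero>\<^bsub>F\<^esub>" by blast
qed

sublocale Fg: abelian_group F by (rule F_ag)

lemma F_finsum: "f \<in> A \<rightarrow> fs \<Longrightarrow> finsum F f A = finsum E f A"
proof (induct A rule: infinite_finite_induct)
  case (infinite A) then show ?case by (simp add: finsum_def finprod_def)
next
  case empty then show ?case by (simp add: Fg.finsum_empty mE.Mg.finsum_empty)
next
  case (insert x A)
  have fA: "f \<in> A \<rightarrow> fs" "f x \<in> fs" using insert by auto
  have "finsum F f (insert x A) = f x \<oplus>\<^bsub>F\<^esub> finsum F f A"
    by (rule Fg.finsum_insert) (use insert fA in auto)
  moreover have "finsum E f (insert x A) = f x \<oplus>\<^bsub>E\<^esub> finsum E f A"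
    by (rule mE.Mg.finsum_insert) (use insert fA fs_carr in auto)
  ultimately show ?case using insert fA by simp
qed

lemma F_inv: "x \<in> fs \<Longrightarrow> \<ominus>\<^bsub>F\<^esub> x = \<ominus>\<^bsub>E\<^esub> x"
proof -
  assume x: "x \<in> fs"
  have "\<ominus>\<^bsub>F\<^esub> x \<in> fs" "\<ominus>\<^bsub>F\<^esub> x \<oplus>\<^bsub>E\<^esub> x = \<zero>\<^bsub>E\<^esub>"
    using Fg.a_inv_closed[of x] Fg.l_neg[of x] x by auto
  then show ?thesis using mE.Mg.minus_equality[of "\<ominus>\<^bsub>F\<^esub> x" x] x fs_carr by metis
qed

lemma gF_sub: "additive_subgroup (gF n) F"
proof (rule additive_subgroupI, rule group.subgroupI[OF Fg.a_group])
  show "gF n \<subseteq> carrier (add_monoid F)" by (auto simp: gF_eq)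
  show "gF n \<noteq> {}" using fs_zero gEE.g_zero by (auto simp: gF_eq)
next
  fix a assume a: "a \<in> gF n"
  have "inv\<^bsub>add_monoid F\<^esub> a = \<ominus>\<^bsub>F\<^esub> a" by (simp add: a_inv_def)
  then show "inv\<^bsub>add_monoid F\<^esub> a \<in> gF n" using a F_inv fs_neg gEE.g_neg by (auto simp: gF_eq)
next
  fix a b assume "a \<in> gF n" "b \<in> gF n"
  then show "a \<otimes>\<^bsub>add_monoid F\<^esub> b \<in> gF n" using fs_add gEE.g_add by (auto simp: gF_eq)
qed

lemma decomp_FE:
  assumes "\<And>n. c n \<in> gF n"
  shows "decomp F gF x c \<longleftrightarrow> decomp E gE x c"
proof -
  have "supp F c = supp E c" by (simp add: supp_def)
  moreover have "finsum F c (supp E c) = finsum E c (supp E c)"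
    by (rule F_finsum) (use assms in \<open>auto simp: gF_eq\<close>)
  moreover have "\<forall>n. c n \<in> gE n" using assms by (auto simp: gF_eq)
  ultimately show ?thesis using assms unfolding decomp_def by auto
qed

lemma gF_gs: "graded_sum F gF"
  unfolding graded_sum_alt
proof (intro conjI allI ballI)
  fix n show "additive_subgroup (gF n) F" by (rule gF_sub)
next
  fix x assume "x \<in> carrier F"
  then have x: "x \<in> fs" by simp
  have cg: "\<And>n. cmp E gE x n \<in> gF n" using fs_cmp[OF x] gEE.cmp_in fs_carr[OF x] by (auto simp: gF_eq)
  have d: "decomp F gF x (cmp E gE x)" using decomp_FE[OF cg] gEE.cmp_decomp fs_carr[OF x] by blast
  show "\<exists>!c. decomp F gF x c"
  proof (rule ex1I[where a="cmp E gE x"])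
    show "decomp F gF x (cmp E gE x)" by (rule d)
  next
    fix c assume c: "decomp F gF x c"
    then have "\<And>n. c n \<in> gF n" by (simp add: decomp_def)
    then have "decomp E gE x c" using decomp_FE c by blast
    then show "c = cmp E gE x" using gEE.cmp_eq by simp
  qed
qed

sublocale gFF: gsum F gF
  by (rule gsum.intro[OF F_ag]) (unfold_locales, rule gF_gs)

lemma cmpF: "x \<in> fs \<Longrightarrow> cmp F gF x = cmp E gE x"
proof -
  assume x: "x \<in> fs"
  have cg: "\<And>n. cmp E gE x n \<in> gF n" using fs_cmp[OF x] gEE.cmp_in fs_carr[OF x] by (auto simp: gF_eq)
  have "decomp F gF x (cmp E gE x)" using decomp_FE[OF cg] gEE.cmp_decomp fs_carr[OF x] by blast
  then show ?thesis using gFF.cmp_eq by blast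
qed

end

context fsh begin

lemma Qcarr_E: "C \<in> carrier (R Quot J) \<Longrightarrow> \<exists>r\<in>carrier R. C = J +>\<^bsub>R\<^esub> r"
  using Q.carrier_Q by auto

lemma F_lmod: "lmodule (R Quot J) F"
  unfolding lmodule_def
proof (intro conjI ballI)
  show "ring (R Quot J)" by (rule Q.Qring)
  show "abelian_group F" by (rule F_ag)
next
  fix a x assume a: "a \<in> carrier (R Quot J)" and x: "x \<in> carrier F"
  obtain r where r: "r \<in> carrier R" "a = J +>\<^bsub>R\<^esub> r" using Qcarr_E[OF a] by blast
  show "a \<odot>\<^bsub>F\<^esub> x \<in> carrier F" using r x F_smult fs_smult by simp
next
  fix a b x assume a: "a \<in> carrier (R Quot J)" and b: "b \<in> carrier (R Quot J)" and x: "x \<in> carrier F"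
  obtain r where r: "r \<in> carrier R" "a = J +>\<^bsub>R\<^esub> r" using Qcarr_E[OF a] by blast
  obtain s where s: "s \<in> carrier R" "b = J +>\<^bsub>R\<^esub> s" using Qcarr_E[OF b] by blast
  have xs: "x \<in> fs" using x by simp
  have ab: "a \<oplus>\<^bsub>R Quot J\<^esub> b = J +>\<^bsub>R\<^esub> (r \<oplus>\<^bsub>R\<^esub> s)" using r s by simp
  have "(a \<oplus>\<^bsub>R Quot J\<^esub> b) \<odot>\<^bsub>F\<^esub> x = (r \<oplus>\<^bsub>R\<^esub> s) \<odot>\<^bsub>E\<^esub> x"
    unfolding ab by (rule F_smult) (use r s xs in auto)
  also have "\<dots> = r \<odot>\<^bsub>E\<^esub> x \<oplus>\<^bsub>E\<^esub> s \<odot>\<^bsub>E\<^esub> x" using mE.sm_ldistr r s fs_carr[OF xs] by simp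
  finally show "(a \<oplus>\<^bsub>R Quot J\<^esub> b) \<odot>\<^bsub>F\<^esub> x = a \<odot>\<^bsub>F\<^esub> x \<oplus>\<^bsub>F\<^esub> b \<odot>\<^bsub>F\<^esub> x"
    using r s xs F_smult by simp
next
  fix a x y assume a: "a \<in> carrier (R Quot J)" and x: "x \<in> carrier F" and y: "y \<in> carrier F"
  obtain r where r: "r \<in> carrier R" "a = J +>\<^bsub>R\<^esub> r" using Qcarr_E[OF a] by blast
  have xs: "x \<in> fs" "y \<in> fs" using x y by auto
  have "a \<odot>\<^bsub>F\<^esub> (x \<oplus>\<^bsub>F\<^esub> y) = r \<odot>\<^bsub>E\<^esub> (x \<oplus>\<^bsub>E\<^esub> y)" using r xs fs_add F_smult by simp
  also have "\<dots> = r \<odot>\<^bsub>E\<^esub> x \<oplus>\<^bsub>E\<^esub> r \<odot>\<^bsub>E\<^esub> y" using mE.sm_rdistr r xs fs_carr by simp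
  finally show "a \<odot>\<^bsub>F\<^esub> (x \<oplus>\<^bsub>F\<^esub> y) = a \<odot>\<^bsub>F\<^esub> x \<oplus>\<^bsub>F\<^esub> a \<odot>\<^bsub>F\<^esub> y"
    using r xs F_smult by simp
next
  fix a b x assume a: "a \<in> carrier (R Quot J)" and b: "b \<in> carrier (R Quot J)" and x: "x \<in> carrier F"
  obtain r where r: "r \<in> carrier R" "a = J +>\<^bsub>R\<^esub> r" using Qcarr_E[OF a] by blast
  obtain s where s: "s \<in> carrier R" "b = J +>\<^bsub>R\<^esub> s" using Qcarr_E[OF b] by blast
  have xs: "x \<in> fs" using x by simp
  have ab: "a \<otimes>\<^bsub>R Quot J\<^esub> b = J +>\<^bsub>R\<^esub> (r \<otimes>\<^bsub>R\<^esub> s)" using r s by simp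
  have "(a \<otimes>\<^bsub>R Quot J\<^esub> b) \<odot>\<^bsub>F\<^esub> x = (r \<otimes>\<^bsub>R\<^esub> s) \<odot>\<^bsub>E\<^esub> x"
    unfolding ab by (rule F_smult) (use r s xs in auto)
  also have "\<dots> = r \<odot>\<^bsub>E\<^esub> (s \<odot>\<^bsub>E\<^esub> x)" using mE.sm_assoc r s fs_carr[OF xs] by simp
  finally show "(a \<otimes>\<^bsub>R Quot J\<^esub> b) \<odot>\<^bsub>F\<^esub> x = a \<odot>\<^bsub>F\<^esub> (b \<odot>\<^bsub>F\<^esub> x)"
    using r s xs F_smult fs_smult by simp
next
  fix x assume x: "x \<in> carrier F"
  have "\<one>\<^bsub>R Quot J\<^esub> = J +>\<^bsub>R\<^esub> \<one>\<^bsub>R\<^esub>" by simp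
  then show "\<one>\<^bsub>R Quot J\<^esub> \<odot>\<^bsub>F\<^esub> x = x"
    using F_smult[of "\<one>\<^bsub>R\<^esub>" x] x mE.sm_one fs_carr by simp
qed

lemma F_SG: "SG_module (R Quot J) (quot_grading R g J) F gF"
  unfolding SG_module_def
proof (intro conjI allI impI ballI)
  show "SG_ring (R Quot J) (quot_grading R g J)" by (rule Q.SG_Q)
  show "lmodule (R Quot J) F" by (rule F_lmod)
  show "graded_sum F gF" by (rule gF_gs)
next
  fix m n C x assume m: "0 \<le> m" and C: "C \<in> quot_grading R g J m" and x: "x \<in> gF n"
  obtain r where r: "r \<in> g m" "C = J +>\<^bsub>R\<^esub> r" using C by (auto simp: Q.qg_eq)
  have rc: "r \<in> carrier R" using r Q.gR.g_carr by blast
  have xs: "x \<in> fs" "x \<in> gE n" using x by (auto simp: gF_eq)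
  have y: "C \<odot>\<^bsub>F\<^esub> x = r \<odot>\<^bsub>E\<^esub> x" using F_smult rc xs r by simp
  have yg: "r \<odot>\<^bsub>E\<^esub> x \<in> gsub E gE {..m+n}" using SGm m r xs by (simp add: SG_module_def)
  have yf: "r \<odot>\<^bsub>E\<^esub> x \<in> fs" using fs_smult rc xs by simp
  show "C \<odot>\<^bsub>F\<^esub> x \<in> gsub F gF {..m + n}"
    unfolding y using yg yf gEE.gsub_iff gFF.gsub_iff cmpF[OF yf] by simp
qed

lemma F_LSG:
  assumes comp: "compatible_ideal R g J"
  shows "LSG_module (R Quot J) (quot_grading R g J) F gF"
  unfolding LSG_module_def
proof (intro conjI allI ballI)
  show "SG_module (R Quot J) (quot_grading R g J) F gF" by (rule F_SG)
next
  fix n m C x assume C: "C \<in> Rp_n (R Quot J) (quot_grading R g J) n" and x: "x \<in> gF m"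
  have "C \<in> Rp (R Quot J) (quot_grading R g J)" using C by (auto simp: Rp_def)
  then obtain r where r: "r \<in> Rp R g" "C = J +>\<^bsub>R\<^esub> r" using comp by (auto simp: compatible_ideal_def)
  then obtain k where k: "r \<in> Rp_n R g k" by (auto simp: Rp_def)
  have rg: "r \<in> g k" using k by (simp add: Rp_n_def)
  have rc: "r \<in> carrier R" using rg Q.gR.g_carr by blast
  have xs: "x \<in> fs" "x \<in> gE m" using x by (auto simp: gF_eq)
  have y: "C \<odot>\<^bsub>F\<^esub> x = r \<odot>\<^bsub>E\<^esub> x" using F_smult rc xs r by simp
  have yf: "r \<odot>\<^bsub>E\<^esub> x \<in> fs" using fs_smult rc xs by simp
  have Cn: "C \<in> quot_grading R g J n" using C by (simp add: Rp_n_def)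
  have Ck: "C \<in> quot_grading R g J k" using rg r by (auto simp: Q.qg_eq)
  show "C \<odot>\<^bsub>F\<^esub> x \<in> gF (n + m)"
  proof (cases "k = n")
    case True
    then have "r \<odot>\<^bsub>E\<^esub> x \<in> gE (n + m)" using LSG k xs by (simp add: LSG_module_def)
    then show ?thesis using y yf by (simp add: gF_eq)
  next
    case False
    then have "C = \<zero>\<^bsub>R Quot J\<^esub>" using Q.gQ.homog_disjoint[OF Cn Ck] by simp
    then have "r \<in> J" using r rc Q.pi_zero_iff Q.zero_Q by simp
    then have "r \<odot>\<^bsub>E\<^esub> x = \<zero>\<^bsub>E\<^esub>" using fs_ann xs by simp
    then show ?thesis using y fs_zero gEE.g_zero by (simp add: gF_eq)
  qed
qed

end

definition liftM :: "('a, 'b) ring_scheme \<Rightarrow> 'a set \<Rightarrow> ('a set, 'm) module \<Rightarrow> ('a, 'm) module" where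
  "liftM R J M = \<lparr>carrier = carrier M, monoid.mult = monoid.mult M, one = one M,
     zero = zero M, add = add M, smult = (\<lambda>r x. (J +>\<^bsub>R\<^esub> r) \<odot>\<^bsub>M\<^esub> x)\<rparr>"

lemma lift_simps [simp]:
  "carrier (liftM R J M) = carrier M" "add (liftM R J M) = add M" "zero (liftM R J M) = zero M"
  "smult (liftM R J M) r x = (J +>\<^bsub>R\<^esub> r) \<odot>\<^bsub>M\<^esub> x"
  by (simp_all add: liftM_def)

lemma lift_finsum: "finsum (liftM R J M) = finsum M"
  by (simp add: fun_eq_iff finsum_def finprod_def liftM_def)

lemma lift_gsub: "gsub (liftM R J M) = gsub M"
  by (simp add: fun_eq_iff gsub_def lift_finsum)

lemma lift_addsub: "additive_subgroup H (liftM R J M) \<longleftrightarrow> additive_subgroup H M"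
  by (simp add: additive_subgroup_def subgroup_def m_inv_def liftM_def)

lemma lift_gs: "graded_sum (liftM R J M) g \<longleftrightarrow> graded_sum M g"
  by (simp add: graded_sum_def lift_addsub lift_finsum)

lemma lift_cut: "liftM R J (M\<lparr>carrier := N\<rparr>) = (liftM R J M)\<lparr>carrier := N\<rparr>"
  by (simp add: liftM_def)

lemma lift_ag: "abelian_group M \<Longrightarrow> abelian_group (liftM R J M)"
proof -
  assume M: "abelian_group M"
  interpret M: abelian_group M by (rule M)
  show ?thesis
  proof (rule abelian_groupI)
    show "\<zero>\<^bsub>liftM R J M\<^esub> \<in> carrier (liftM R J M)" by simp
  next
    fix x assume "x \<in> carrier (liftM R J M)"
    then have "\<ominus>\<^bsub>M\<^esub> x \<in> carrier (liftM R J M)" "\<ominus>\<^bsub>M\<^esub> x \<oplus>\<^bsub>liftM R J M\<^esub> x = \<zero>\<^bsub>liftM R J M\<^esub>" by (auto simp: M.l_neg)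
    then show "\<exists>y\<in>carrier (liftM R J M). y \<oplus>\<^bsub>liftM R J M\<^esub> x = \<zero>\<^bsub>liftM R J M\<^esub>" by blast
  qed (auto simp: M.a_ac)
qed

context fsh begin

lemma lift_lmod:
  fixes M :: "('a set, 'm) module"
  assumes lmM: "lmodule (R Quot J) M"
  shows "lmodule R (liftM R J M)"
proof -
  interpret mM: lmod "R Quot J" M by (unfold_locales, rule lmM)
  have pc: "\<And>a. a \<in> carrier R \<Longrightarrow> J +>\<^bsub>R\<^esub> a \<in> carrier (R Quot J)" by simp
  show ?thesis
    unfolding lmodule_def
  proof (intro conjI ballI)
    show "ring R" by (rule Rring)
    show "abelian_group (liftM R J M)" by (rule lift_ag[OF mM.Mag])
  next
    fix a x assume "a \<in> carrier R" "x \<in> carrier (liftM R J M)"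
    then show "a \<odot>\<^bsub>liftM R J M\<^esub> x \<in> carrier (liftM R J M)" using mM.sm_closed pc by simp
  next
    fix a b x assume "a \<in> carrier R" "b \<in> carrier R" "x \<in> carrier (liftM R J M)"
    then show "(a \<oplus>\<^bsub>R\<^esub> b) \<odot>\<^bsub>liftM R J M\<^esub> x = a \<odot>\<^bsub>liftM R J M\<^esub> x \<oplus>\<^bsub>liftM R J M\<^esub> b \<odot>\<^bsub>liftM R J M\<^esub> x"
      using mM.sm_ldistr pc by simp
  next
    fix a x y assume "a \<in> carrier R" "x \<in> carrier (liftM R J M)" "y \<in> carrier (liftM R J M)"
    then show "a \<odot>\<^bsub>liftM R J M\<^esub> (x \<oplus>\<^bsub>liftM R J M\<^esub> y) = a \<odot>\<^bsub>liftM R J M\<^esub> x \<oplus>\<^bsub>liftM R J M\<^esub> a \<odot>\<^bsub>liftM R J M\<^esub> y"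
      using mM.sm_rdistr pc by simp
  next
    fix a b x assume "a \<in> carrier R" "b \<in> carrier R" "x \<in> carrier (liftM R J M)"
    then show "(a \<otimes>\<^bsub>R\<^esub> b) \<odot>\<^bsub>liftM R J M\<^esub> x = a \<odot>\<^bsub>liftM R J M\<^esub> (b \<odot>\<^bsub>liftM R J M\<^esub> x)"
      using mM.sm_assoc pc by simp
  next
    fix x assume "x \<in> carrier (liftM R J M)"
    then show "\<one>\<^bsub>R\<^esub> \<odot>\<^bsub>liftM R J M\<^esub> x = x" using mM.sm_one by simp
  qed
qed

lemma Rp_map: "r \<in> Rp_n R g n \<Longrightarrow> J +>\<^bsub>R\<^esub> r \<in> Rp_n (R Quot J) (quot_grading R g J) n"
proof -
  assume r: "r \<in> Rp_n R g n"
  have rg: "r \<in> g n" and rc: "r \<in> carrier R" using r Q.gR.g_carr by (auto simp: Rp_n_def)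
  show ?thesis unfolding Rp_n_def
  proof (intro CollectI conjI allI ballI)
    show "J +>\<^bsub>R\<^esub> r \<in> quot_grading R g J n" using rg by (auto simp: Q.qg_eq)
  next
    fix m h assume "h \<in> quot_grading R g J m"
    then obtain h' where h': "h' \<in> g m" "h = J +>\<^bsub>R\<^esub> h'" by (auto simp: Q.qg_eq)
    have "(J +>\<^bsub>R\<^esub> r) \<otimes>\<^bsub>R Quot J\<^esub> h = J +>\<^bsub>R\<^esub> (r \<otimes>\<^bsub>R\<^esub> h')"
      using h' rc Q.gR.g_carr by simp
    moreover have "r \<otimes>\<^bsub>R\<^esub> h' \<in> g (n + m)" using r h' by (simp add: Rp_n_def)
    ultimately show "(J +>\<^bsub>R\<^esub> r) \<otimes>\<^bsub>R Quot J\<^esub> h \<in> quot_grading R g J (n + m)"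
      by (auto simp: Q.qg_eq)
  qed
qed

lemma lift_LSG:
  fixes M :: "('a set, 'm) module"
  assumes L: "LSG_module (R Quot J) (quot_grading R g J) M gM"
  shows "LSG_module R g (liftM R J M) gM"
proof -
  have S: "SG_module (R Quot J) (quot_grading R g J) M gM" using L by (simp add: LSG_module_def)
  show ?thesis
    unfolding LSG_module_def SG_module_def
  proof (intro conjI allI impI ballI)
    show "SG_ring R g" by (rule SGR)
    show "lmodule R (liftM R J M)" by (rule lift_lmod) (use S in \<open>simp add: SG_module_def\<close>)
    show "graded_sum (liftM R J M) gM" using S by (simp add: SG_module_def lift_gs)
  next
    fix m n r x assume m: "0 \<le> m" and r: "r \<in> g m" and x: "x \<in> gM n"
    have "J +>\<^bsub>R\<^esub> r \<in> quot_grading R g J m" using r by (auto simp: Q.qg_eq)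
    then show "r \<odot>\<^bsub>liftM R J M\<^esub> x \<in> gsub (liftM R J M) gM {..m + n}"
      using S m x by (simp add: SG_module_def lift_gsub)
  next
    fix n m r x assume r: "r \<in> Rp_n R g n" and x: "x \<in> gM m"
    show "r \<odot>\<^bsub>liftM R J M\<^esub> x \<in> gM (n + m)"
      using Rp_map[OF r] L x by (simp add: LSG_module_def)
  qed
qed

lemma lift_SGsub:
  fixes M :: "('a set, 'm) module"
  assumes S: "SG_submodule (R Quot J) M gM N"
  shows "SG_submodule R (liftM R J M) gM N"
  using S unfolding SG_submodule_def submodule_set_def lift_gsub by simp

lemma lift_tors:
  fixes M :: "('a set, 'm) module"
  assumes T: "quotient_torsion (R Quot J) (quot_grading R g J) M N"
  shows "quotient_torsion R g (liftM R J M) N"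
  unfolding quotient_torsion_def
proof
  fix x assume "x \<in> carrier (liftM R J M)"
  then obtain n t where nt: "t \<ge> 0" "\<forall>a\<in>ideal_pow (R Quot J) (R_ge (R Quot J) (quot_grading R g J) t) n. a \<odot>\<^bsub>M\<^esub> x \<in> N"
    using T by (auto simp: quotient_torsion_def)
  have "\<forall>a\<in>ideal_pow R (R_ge R g t) n. a \<odot>\<^bsub>liftM R J M\<^esub> x \<in> N"
    using nt Q.pow_map by simp
  then show "\<exists>n t. 0 \<le> t \<and> (\<forall>a\<in>ideal_pow R (R_ge R g t) n. a \<odot>\<^bsub>liftM R J M\<^esub> x \<in> N)"
    using nt by blast
qed

lemma hom_down:
  fixes X :: "('a set, 'm) module"
  assumes h: "gr_hom (R Quot J) X gX F gF \<psi>"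
  shows "gr_hom R (liftM R J X) gX E gE \<psi>"
  unfolding gr_hom_def
proof (intro conjI ballI allI)
  have im: "\<psi> ` carrier X \<subseteq> fs" using h by (simp add: gr_hom_def)
  then show "\<psi> ` carrier (liftM R J X) \<subseteq> carrier E" using fs_carr by auto
  fix x y assume "x \<in> carrier (liftM R J X)" "y \<in> carrier (liftM R J X)"
  then show "\<psi> (x \<oplus>\<^bsub>liftM R J X\<^esub> y) = \<psi> x \<oplus>\<^bsub>E\<^esub> \<psi> y" using h by (simp add: gr_hom_def)
next
  have im: "\<psi> ` carrier X \<subseteq> fs" using h by (simp add: gr_hom_def)
  fix a x assume a: "a \<in> carrier R" and x: "x \<in> carrier (liftM R J X)"
  have "\<psi> ((J +>\<^bsub>R\<^esub> a) \<odot>\<^bsub>X\<^esub> x) = (J +>\<^bsub>R\<^esub> a) \<odot>\<^bsub>F\<^esub> \<psi> x"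
    using h a x by (simp add: gr_hom_def)
  also have "\<dots> = a \<odot>\<^bsub>E\<^esub> \<psi> x" using F_smult a im x by auto
  finally show "\<psi> (a \<odot>\<^bsub>liftM R J X\<^esub> x) = a \<odot>\<^bsub>E\<^esub> \<psi> x" by simp
next
  fix n show "\<psi> ` gX n \<subseteq> gE n" using h by (auto simp: gr_hom_def gF_eq)
qed

end

context fsh begin

lemma hom_up:
  fixes M :: "('a set, 'm) module"
  assumes L: "LSG_module (R Quot J) (quot_grading R g J) M gM"
    and h: "gr_hom R (liftM R J M) gM E gE \<psi>"
  shows "gr_hom (R Quot J) M gM F gF \<psi>"
proof -
  have S: "SG_module (R Quot J) (quot_grading R g J) M gM" using L by (simp add: LSG_module_def)
  have lmM: "lmodule (R Quot J) M" using S by (simp add: SG_module_def)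
  interpret mM: lmod "R Quot J" M by (unfold_locales, rule lmM)
  interpret gMM: gsum M gM
    by (rule gsum.intro[OF mM.Mag]) (unfold_locales, use S in \<open>simp add: SG_module_def\<close>)
  have hc: "\<And>x. x \<in> carrier M \<Longrightarrow> \<psi> x \<in> carrier E" using h by (auto simp: gr_hom_def)
  have ha: "\<And>x y. x \<in> carrier M \<Longrightarrow> y \<in> carrier M \<Longrightarrow> \<psi> (x \<oplus>\<^bsub>M\<^esub> y) = \<psi> x \<oplus>\<^bsub>E\<^esub> \<psi> y"
    using h by (simp add: gr_hom_def)
  have hs: "\<And>a x. a \<in> carrier R \<Longrightarrow> x \<in> carrier M \<Longrightarrow> \<psi> ((J +>\<^bsub>R\<^esub> a) \<odot>\<^bsub>M\<^esub> x) = a \<odot>\<^bsub>E\<^esub> \<psi> x"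
    using h by (simp add: gr_hom_def)
  have hg: "\<And>n. \<psi> ` gM n \<subseteq> gE n" using h by (simp add: gr_hom_def)
  have h0: "\<psi> \<zero>\<^bsub>M\<^esub> = \<zero>\<^bsub>E\<^esub>"
  proof -
    have "\<psi> \<zero>\<^bsub>M\<^esub> \<oplus>\<^bsub>E\<^esub> \<psi> \<zero>\<^bsub>M\<^esub> = \<psi> \<zero>\<^bsub>M\<^esub>" using ha[of "\<zero>\<^bsub>M\<^esub>" "\<zero>\<^bsub>M\<^esub>"] by simp
    then show ?thesis using mE.Mg.add.l_cancel_one[of "\<psi> \<zero>\<^bsub>M\<^esub>" "\<psi> \<zero>\<^bsub>M\<^esub>"] hc[of "\<zero>\<^bsub>M\<^esub>"] by simp
  qed
  have hfin: "\<And>f A. f \<in> A \<rightarrow> carrier M \<Longrightarrow> \<psi> (finsum M f A) = finsum E (\<lambda>k. \<psi> (f k)) A"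
  proof -
    fix f A show "f \<in> A \<rightarrow> carrier M \<Longrightarrow> \<psi> (finsum M f A) = finsum E (\<lambda>k. \<psi> (f k)) A"
    proof (induct A rule: infinite_finite_induct)
      case (infinite A) then show ?case using h0 by (simp add: finsum_def finprod_def)
    next
      case empty then show ?case using h0 by simp
    next
      case (insert x A)
      then have fA: "f \<in> A \<rightarrow> carrier M" "f x \<in> carrier M" by auto
      have "finsum M f (insert x A) = f x \<oplus>\<^bsub>M\<^esub> finsum M f A"
        by (rule mM.Mg.finsum_insert) (use insert fA in auto)
      moreover have "finsum E (\<lambda>k. \<psi> (f k)) (insert x A) = \<psi> (f x) \<oplus>\<^bsub>E\<^esub> finsum E (\<lambda>k. \<psi> (f k)) A"
        by (rule mE.Mg.finsum_insert) (use insert fA hc in auto)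
      ultimately show ?case using insert fA ha mM.Mg.finsum_closed by simp
    qed
  qed
  let ?N = "\<psi> ` carrier M"
  have smN: "submodule_set R E ?N"
    unfolding submodule_set_def
  proof (intro conjI ballI)
    show "?N \<subseteq> carrier E" using hc by auto
    show "\<zero>\<^bsub>E\<^esub> \<in> ?N" using h0 by (metis image_eqI mM.Mg.zero_closed)
  next
    fix u v assume "u \<in> ?N" "v \<in> ?N"
    then obtain x y where "x \<in> carrier M" "y \<in> carrier M" "u = \<psi> x" "v = \<psi> y" by blast
    then show "u \<oplus>\<^bsub>E\<^esub> v \<in> ?N" using ha by (metis image_eqI mM.Mg.add.m_closed)
  next
    fix a u assume a: "a \<in> carrier R" and "u \<in> ?N"
    then obtain x where x: "x \<in> carrier M" "u = \<psi> x" by blast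
    have "(J +>\<^bsub>R\<^esub> a) \<odot>\<^bsub>M\<^esub> x \<in> carrier M" using mM.sm_closed a x by simp
    then show "a \<odot>\<^bsub>E\<^esub> u \<in> ?N" using hs[OF a x(1)] x by (metis image_eqI)
  qed
  have SGN: "SG_submodule R E gE ?N"
  proof (rule SGsub_intro[OF smN])
    fix u n assume "u \<in> ?N"
    then obtain x where x: "x \<in> carrier M" "u = \<psi> x" by blast
    let ?S = "supp M (cmp M gM x)"
    have fS: "finite ?S" and xS: "x = finsum M (cmp M gM x) ?S"
      using gMM.cmp_decomp[OF x(1)] by (auto simp: decomp_def)
    have "\<psi> x = finsum E (\<lambda>k. \<psi> (cmp M gM x k)) ?S"
      using hfin[of "cmp M gM x" ?S] gMM.cmp_carr[OF x(1)] xS by auto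
    moreover have "\<forall>k\<in>?S. \<psi> (cmp M gM x k) \<in> gE k" using hg gMM.cmp_in[OF x(1)] by blast
    ultimately have "cmp E gE (\<psi> x) = ext E (\<lambda>k. \<psi> (cmp M gM x k)) ?S"
      using gEE.cmp_finsum[OF fS] by simp
    then have "cmp E gE u n = (if n \<in> ?S then \<psi> (cmp M gM x n) else \<zero>\<^bsub>E\<^esub>)"
      using x by (simp add: ext_def)
    then show "cmp E gE u n \<in> ?N"
      using gMM.cmp_carr[OF x(1)] h0 by (metis image_eqI mM.Mg.zero_closed)
  qed
  have annN: "annihilated_by E J ?N"
    unfolding annihilated_by_def
  proof (intro ballI)
    fix j u assume j: "j \<in> J" and "u \<in> ?N"
    then obtain x where x: "x \<in> carrier M" "u = \<psi> x" by blast
    have jc: "j \<in> carrier R" using j Q.Jsub by blast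
    have "J +>\<^bsub>R\<^esub> j = \<zero>\<^bsub>R Quot J\<^esub>" using Q.pi_zero_iff[OF jc] j Q.zero_Q by simp
    then have "(J +>\<^bsub>R\<^esub> j) \<odot>\<^bsub>M\<^esub> x = \<zero>\<^bsub>M\<^esub>" using mM.sm_zero_l[OF x(1)] by simp
    then show "j \<odot>\<^bsub>E\<^esub> u = \<zero>\<^bsub>E\<^esub>" using hs[OF jc x(1)] x h0 by simp
  qed
  have imF: "\<And>x. x \<in> carrier M \<Longrightarrow> \<psi> x \<in> fs" using fsI[OF SGN annN] by blast
  show ?thesis
    unfolding gr_hom_def
  proof (intro conjI ballI allI)
    show "\<psi> ` carrier M \<subseteq> carrier F" using imF by auto
  next
    fix x y assume "x \<in> carrier M" "y \<in> carrier M"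
    then show "\<psi> (x \<oplus>\<^bsub>M\<^esub> y) = \<psi> x \<oplus>\<^bsub>F\<^esub> \<psi> y" using ha by simp
  next
    fix C x assume C: "C \<in> carrier (R Quot J)" and x: "x \<in> carrier M"
    obtain a where a: "a \<in> carrier R" "C = J +>\<^bsub>R\<^esub> a" using Qcarr_E[OF C] by blast
    show "\<psi> (C \<odot>\<^bsub>M\<^esub> x) = C \<odot>\<^bsub>F\<^esub> \<psi> x"
      using hs[OF a(1) x] F_smult[OF a(1) imF[OF x]] a(2) by simp
  next
    fix n show "\<psi> ` gM n \<subseteq> gF n"
      using hg imF gMM.g_carr by (auto simp: gF_eq)
  qed
qed

end

theorem mainTheorem10:
  fixes R :: "('a, 'b) ring_scheme" and g :: "int \<Rightarrow> 'a set"
    and J :: "'a set"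
    and E :: "('a, 'e) module" and gE :: "int \<Rightarrow> 'e set"
  assumes "schematic R g"
    and "SG_ideal R g J"
    and "compatible_ideal R g J"
    and "LSG_module R g E gE"
    and "T_closed TYPE('m) R g E gE"
  shows "LSG_module (R Quot J) (quot_grading R g J) (fshriek R E gE J) (fshriek_grading R E gE J)
     \<and> T_closed TYPE('m) (R Quot J) (quot_grading R g J) (fshriek R E gE J) (fshriek_grading R E gE J)"
proof -
  interpret fsh R g E gE J by (unfold_locales, rule assms(4), rule assms(2))
  have L: "LSG_module (R Quot J) (quot_grading R g J) F gF" by (rule F_LSG[OF assms(3)])
  have TE: "\<And>(M :: ('a, 'm) module) gM N \<phi>.
        LSG_module R g M gM \<Longrightarrow> SG_submodule R M gM N \<Longrightarrow> quotient_torsion R g M N \<Longrightarrow>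
        gr_hom R (M\<lparr>carrier := N\<rparr>) (\<lambda>n. N \<inter> gM n) E gE \<phi> \<Longrightarrow>
        (\<exists>\<psi>. gr_hom R M gM E gE \<psi> \<and> (\<forall>x\<in>N. \<psi> x = \<phi> x)) \<and>
        (\<forall>\<psi>1 \<psi>2. gr_hom R M gM E gE \<psi>1 \<and> (\<forall>x\<in>N. \<psi>1 x = \<phi> x) \<and>
                  gr_hom R M gM E gE \<psi>2 \<and> (\<forall>x\<in>N. \<psi>2 x = \<phi> x) \<longrightarrow>
                  (\<forall>x\<in>carrier M. \<psi>1 x = \<psi>2 x))"
    using assms(5) unfolding T_closed_def by blast
  have "T_closed TYPE('m) (R Quot J) (quot_grading R g J) F gF"
    unfolding T_closed_def
  proof (rule conjI[OF L], intro allI impI)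
    fix M :: "('a set, 'm) module" and gM N \<phi>
    assume P: "LSG_module (R Quot J) (quot_grading R g J) M gM \<and> SG_submodule (R Quot J) M gM N \<and>
       quotient_torsion (R Quot J) (quot_grading R g J) M N \<and>
       gr_hom (R Quot J) (M\<lparr>carrier := N\<rparr>) (\<lambda>n. N \<inter> gM n) F gF \<phi>"
    have p1: "LSG_module R g (liftM R J M) gM" using lift_LSG P by blast
    have p2: "SG_submodule R (liftM R J M) gM N" using lift_SGsub P by blast
    have p3: "quotient_torsion R g (liftM R J M) N" using lift_tors P by blast
    have p4: "gr_hom R ((liftM R J M)\<lparr>carrier := N\<rparr>) (\<lambda>n. N \<inter> gM n) E gE \<phi>"
      using hom_down[of "M\<lparr>carrier := N\<rparr>" "\<lambda>n. N \<inter> gM n" \<phi>] P lift_cut by metis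
    note T = TE[OF p1 p2 p3 p4]
    show "(\<exists>\<psi>. gr_hom (R Quot J) M gM F gF \<psi> \<and> (\<forall>x\<in>N. \<psi> x = \<phi> x)) \<and>
        (\<forall>\<psi>1 \<psi>2. gr_hom (R Quot J) M gM F gF \<psi>1 \<and> (\<forall>x\<in>N. \<psi>1 x = \<phi> x) \<and>
                  gr_hom (R Quot J) M gM F gF \<psi>2 \<and> (\<forall>x\<in>N. \<psi>2 x = \<phi> x) \<longrightarrow>
                  (\<forall>x\<in>carrier M. \<psi>1 x = \<psi>2 x))"
    proof (intro conjI allI impI)
    show "\<exists>\<psi>. gr_hom (R Quot J) M gM F gF \<psi> \<and> (\<forall>x\<in>N. \<psi> x = \<phi> x)"
      using T hom_up P by blast
  next
      fix \<psi>1 \<psi>2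
      assume a: "gr_hom (R Quot J) M gM F gF \<psi>1 \<and> (\<forall>x\<in>N. \<psi>1 x = \<phi> x) \<and>
              gr_hom (R Quot J) M gM F gF \<psi>2 \<and> (\<forall>x\<in>N. \<psi>2 x = \<phi> x)"
      have "gr_hom R (liftM R J M) gM E gE \<psi>1" "gr_hom R (liftM R J M) gM E gE \<psi>2"
        using a hom_down by blast+
      then show "\<forall>x\<in>carrier M. \<psi>1 x = \<psi>2 x" using T a by simp
    qed
  qed
  then show ?thesis using L by simp
qed

end
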